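(* Let $g$ be either $F$, or $F_{\cdot,c}$ for some fixed $c\in\mathbb{C}^d$, or $f$ in the case $s=n$, with respective parameter spaces $\mathbb{C}^r\times\mathbb{C}^d$, $\mathbb{C}^r$, $\mathbb{C}^r$. If $g_{\alpha^*}(x)=0$ has a nondegenerate solution in $(\mathbb{C}^* )^n$ for some parameter value $\alpha^*$, then there is a nonempty Zariski open subset of the parameter space such that for all $\alpha$ in it, all solutions in $(\mathbb{C}^* )^n$ of $g_\alpha(x)=0$ are nondegenerate.
   Context: Let $N\in\mathbb{C}^{s\times r}$ have rank $s$, $W\in\mathbb{C}^{d\times n}$ have rank $d=n-s$, $B\in\mathbb{Z}^{n\times r}$. $\circ$ is the Hadamard product and $x^B\in\mathbb{C}^r$ has $j$-th entry $\prod_i x_i^{b_{ij}}$. $f(\kappa,x)=N(\kappa\circ x^B)$ with parameters $\kappa\in\mathbb{C}^r$; $F(\kappa,c,x)=\begin{pmatrix}f(\kappa,x)\\ Wx-c\end{pmatrix}$ with parameters $(\kappa,c)\in\mathbb{C}^r\times\mathbb{C}^d$; $F_{\cdot,c}(\kappa,x)=F(\kappa,c,x)$ for fixed $c$, with parameters $\kappa$. For a parametric system $g$ with $t$ equations, $g_\alpha=g(\alpha,\cdot)$, and a solution $x^*\in(\mathbb{C}^* )^n$ of $g_\alpha(x)=0$ is nondegenerate if the Jacobian of $g_\alpha$ with respect to $x$ at $x^*$ has rank $t$. *)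

theory Defs
  imports "HOL-Analysis.Analysis"
begin

text \<open>Vectors in C^k are represented as functions nat => complex that vanish
  outside the index range {0..<k}.\<close>

definition cvec :: "nat \<Rightarrow> (nat \<Rightarrow> complex) set" where
  "cvec k = {x. \<forall>i\<ge>k. x i = 0}"

definition torus :: "nat \<Rightarrow> (nat \<Rightarrow> complex) set" where
  "torus n = {x \<in> cvec n. \<forall>i<n. x i \<noteq> 0}"

definition poly_fun :: "nat \<Rightarrow> ((nat \<Rightarrow> complex) \<Rightarrow> complex) \<Rightarrow> bool" where
  "poly_fun m p \<longleftrightarrow> (\<exists>A (c :: (nat \<Rightarrow> nat) \<Rightarrow> complex).
      finite A \<and> (\<forall>a\<in>A. \<forall>i\<ge>m. a i = 0) \<and>
      p = (\<lambda>z. \<Sum>a\<in>A. c a * (\<Prod>i<m. z i ^ a i)))"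

definition zariski_open :: "nat \<Rightarrow> (nat \<Rightarrow> complex) set \<Rightarrow> bool" where
  "zariski_open m U \<longleftrightarrow> (\<exists>P. (\<forall>p\<in>P. poly_fun m p) \<and>
      U = {z \<in> cvec m. \<exists>p\<in>P. p z \<noteq> 0})"

definition full_row_rank :: "nat \<Rightarrow> nat \<Rightarrow> (nat \<Rightarrow> nat \<Rightarrow> complex) \<Rightarrow> bool" where
  "full_row_rank t k M \<longleftrightarrow>
     (\<forall>a. (\<forall>j<k. (\<Sum>i<t. a i * M i j) = 0) \<longrightarrow> (\<forall>i<t. a i = 0))"

definition jac :: "((nat \<Rightarrow> complex) \<Rightarrow> (nat \<Rightarrow> complex) \<Rightarrow> (nat \<Rightarrow> complex))
    \<Rightarrow> (nat \<Rightarrow> complex) \<Rightarrow> (nat \<Rightarrow> complex) \<Rightarrow> nat \<Rightarrow> nat \<Rightarrow> complex" where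
  "jac G \<alpha> x i j = deriv (\<lambda>z. G \<alpha> (x(j := z)) i) (x j)"

definition nondeg_sol :: "nat \<Rightarrow> nat \<Rightarrow>
    ((nat \<Rightarrow> complex) \<Rightarrow> (nat \<Rightarrow> complex) \<Rightarrow> (nat \<Rightarrow> complex))
    \<Rightarrow> (nat \<Rightarrow> complex) \<Rightarrow> (nat \<Rightarrow> complex) \<Rightarrow> bool" where
  "nondeg_sol t n G \<alpha> x \<longleftrightarrow> x \<in> torus n \<and> (\<forall>i<t. G \<alpha> x i = 0) \<and>
      full_row_rank t n (jac G \<alpha> x)"

definition generic_nondeg_property :: "nat \<Rightarrow> nat \<Rightarrow> nat \<Rightarrow>
    ((nat \<Rightarrow> complex) \<Rightarrow> (nat \<Rightarrow> complex) \<Rightarrow> (nat \<Rightarrow> complex)) \<Rightarrow> bool" where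
  "generic_nondeg_property m t n G \<longleftrightarrow>
     ((\<exists>\<alpha>\<in>cvec m. \<exists>x. nondeg_sol t n G \<alpha> x) \<longrightarrow>
      (\<exists>U. zariski_open m U \<and> U \<noteq> {} \<and>
         (\<forall>\<alpha>\<in>U. \<forall>x\<in>torus n. (\<forall>i<t. G \<alpha> x i = 0) \<longrightarrow> nondeg_sol t n G \<alpha> x)))"

definition monvec :: "nat \<Rightarrow> (nat \<Rightarrow> nat \<Rightarrow> int) \<Rightarrow> (nat \<Rightarrow> complex) \<Rightarrow> nat \<Rightarrow> complex" where
  "monvec n B x j = (\<Prod>i<n. x i powi B i j)"

definition fsys :: "nat \<Rightarrow> nat \<Rightarrow> nat \<Rightarrow> (nat \<Rightarrow> nat \<Rightarrow> complex) \<Rightarrow> (nat \<Rightarrow> nat \<Rightarrow> int)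
    \<Rightarrow> (nat \<Rightarrow> complex) \<Rightarrow> (nat \<Rightarrow> complex) \<Rightarrow> nat \<Rightarrow> complex" where
  "fsys s r n N B \<kappa> x i = (if i < s then (\<Sum>j<r. N i j * (\<kappa> j * monvec n B x j)) else 0)"

definition Fsys :: "nat \<Rightarrow> nat \<Rightarrow> nat \<Rightarrow> nat \<Rightarrow> (nat \<Rightarrow> nat \<Rightarrow> complex) \<Rightarrow> (nat \<Rightarrow> nat \<Rightarrow> complex)
    \<Rightarrow> (nat \<Rightarrow> nat \<Rightarrow> int) \<Rightarrow> (nat \<Rightarrow> complex) \<Rightarrow> (nat \<Rightarrow> complex) \<Rightarrow> (nat \<Rightarrow> complex) \<Rightarrow> nat \<Rightarrow> complex" where
  "Fsys s d r n N W B \<kappa> c x i =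
     (if i < s then fsys s r n N B \<kappa> x i
      else if i < s + d then (\<Sum>k<n. W (i - s) k * x k) - c (i - s) else 0)"

end

theory Submission
  imports Defs "HOL-Library.Poly_Mapping" "Jordan_Normal_Form.Determinant"
begin


type_synonym mono = "nat \<Rightarrow>\<^sub>0 nat"
type_synonym mpoly = "mono \<Rightarrow>\<^sub>0 complex"

definition mev :: "(nat \<Rightarrow> complex) \<Rightarrow> mono \<Rightarrow> complex" where
  "mev y a = (\<Prod>i\<in>Poly_Mapping.keys a. y i ^ Poly_Mapping.lookup a i)"

definition pev :: "(nat \<Rightarrow> complex) \<Rightarrow> mpoly \<Rightarrow> complex" where
  "pev y p = (\<Sum>a\<in>Poly_Mapping.keys p. Poly_Mapping.lookup p a * mev y a)"

lemma mev_superset: "finite S \<Longrightarrow> Poly_Mapping.keys a \<subseteq> S \<Longrightarrow> mev y a = (\<Prod>i\<in>S. y i ^ Poly_Mapping.lookup a i)"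
  unfolding mev_def by (rule prod.mono_neutral_left) (auto simp: in_keys_iff)

lemma mev_add: "mev y (a + b) = mev y a * mev y b"
proof -
  let ?S = "Poly_Mapping.keys a \<union> Poly_Mapping.keys b"
  have "mev y (a+b) = (\<Prod>i\<in>?S. y i ^ Poly_Mapping.lookup (a+b) i)"
    using keys_add[of a b] by (intro mev_superset) auto
  also have "\<dots> = (\<Prod>i\<in>?S. y i ^ Poly_Mapping.lookup a i) * (\<Prod>i\<in>?S. y i ^ Poly_Mapping.lookup b i)"
    by (simp add: lookup_add power_add prod.distrib)
  also have "\<dots> = mev y a * mev y b"
    by (subst (1 2) mev_superset[of ?S]) auto
  finally show ?thesis .
qed

lemma mev_zero[simp]: "mev y 0 = 1" by (simp add: mev_def)

lemma mev_var[simp]: "mev y (Poly_Mapping.single i 1) = y i" by (simp add: mev_def)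

lemma pev_superset: "finite S \<Longrightarrow> Poly_Mapping.keys p \<subseteq> S \<Longrightarrow> pev y p = (\<Sum>a\<in>S. Poly_Mapping.lookup p a * mev y a)"
  unfolding pev_def by (rule sum.mono_neutral_left) (auto simp: in_keys_iff)

lemma pev_add: "pev y (p + q) = pev y p + pev y q"
proof -
  let ?S = "Poly_Mapping.keys p \<union> Poly_Mapping.keys q"
  have "pev y (p+q) = (\<Sum>a\<in>?S. Poly_Mapping.lookup (p+q) a * mev y a)"
    using keys_add[of p q] by (intro pev_superset) auto
  also have "\<dots> = (\<Sum>a\<in>?S. Poly_Mapping.lookup p a * mev y a) + (\<Sum>a\<in>?S. Poly_Mapping.lookup q a * mev y a)"
    by (simp add: lookup_add distrib_right sum.distrib)
  also have "\<dots> = pev y p + pev y q"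
    by (subst (1 2) pev_superset[of ?S]) auto
  finally show ?thesis .
qed

lemma pev_zero[simp]: "pev y 0 = 0" by (simp add: pev_def)

lemma pev_single[simp]: "pev y (Poly_Mapping.single a c) = c * mev y a"
  by (simp add: pev_def)

lemma pev_sum: "pev y (\<Sum>i\<in>I. f i) = (\<Sum>i\<in>I. pev y (f i))"
  by (induction I rule: infinite_finite_induct) (auto simp: pev_add)

lemma pm_expand: "(p::mpoly) = (\<Sum>a\<in>Poly_Mapping.keys p. Poly_Mapping.single a (Poly_Mapping.lookup p a))"
proof (rule poly_mapping_eqI)
  fix t
  have "Poly_Mapping.lookup (\<Sum>a\<in>Poly_Mapping.keys p. Poly_Mapping.single a (Poly_Mapping.lookup p a)) t
        = (\<Sum>a\<in>Poly_Mapping.keys p. (Poly_Mapping.lookup p a when a = t))"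
    by (simp add: lookup_sum lookup_single)
  also have "\<dots> = Poly_Mapping.lookup p t"
    by (cases "t \<in> Poly_Mapping.keys p") (auto simp: when_def in_keys_iff)
  finally show "Poly_Mapping.lookup p t = Poly_Mapping.lookup (\<Sum>a\<in>Poly_Mapping.keys p. Poly_Mapping.single a (Poly_Mapping.lookup p a)) t" by simp
qed

lemma pev_mult: "pev y (p * q) = pev y p * pev y q"
proof -
  have "p * q = (\<Sum>a\<in>Poly_Mapping.keys p. Poly_Mapping.single a (Poly_Mapping.lookup p a)) * (\<Sum>b\<in>Poly_Mapping.keys q. Poly_Mapping.single b (Poly_Mapping.lookup q b))"
    by (subst (1) pm_expand, subst (2) pm_expand) simp
  also have "\<dots> = (\<Sum>a\<in>Poly_Mapping.keys p. \<Sum>b\<in>Poly_Mapping.keys q. Poly_Mapping.single (a+b) (Poly_Mapping.lookup p a * Poly_Mapping.lookup q b))"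
    apply (simp add: sum_distrib_left sum_distrib_right mult_single)
    by (rule sum.swap)
  finally have "pev y (p*q) = (\<Sum>a\<in>Poly_Mapping.keys p. \<Sum>b\<in>Poly_Mapping.keys q. Poly_Mapping.lookup p a * Poly_Mapping.lookup q b * (mev y a * mev y b))"
    by (simp add: pev_sum mev_add)
  also have "\<dots> = (\<Sum>a\<in>Poly_Mapping.keys p. \<Sum>b\<in>Poly_Mapping.keys q. (Poly_Mapping.lookup p a * mev y a) * (Poly_Mapping.lookup q b * mev y b))"
    by (simp add: mult_ac)
  also have "\<dots> = pev y p * pev y q"
    by (simp add: pev_def sum_product)
  finally show ?thesis .
qed

lemma pev_one[simp]: "pev y 1 = 1"
  by (simp add: pev_def)

lemma pev_power: "pev y (p ^ n) = pev y p ^ n"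
  by (induction n) (auto simp: pev_mult)

lemma pev_prod: "pev y (\<Prod>i\<in>I. f i) = (\<Prod>i\<in>I. pev y (f i))"
  by (induction I rule: infinite_finite_induct) (auto simp: pev_mult)

lemma pev_diff: "pev y (p - q) = pev y p - pev y q"
  using pev_add[of y "p - q" q] by simp

definition var :: "nat \<Rightarrow> mpoly" where "var i = Poly_Mapping.single (Poly_Mapping.single i 1) 1"
definition cst :: "complex \<Rightarrow> mpoly" where "cst c = Poly_Mapping.single 0 c"

lemma pev_var[simp]: "pev y (var i) = y i" by (simp add: var_def mev_def)
lemma pev_cst[simp]: "pev y (cst c) = c" by (simp add: cst_def)

lemma lookup_cst_mult: "Poly_Mapping.lookup (cst k * p) t = k * Poly_Mapping.lookup p t"
proof -
  have "cst k * p = (\<Sum>a\<in>Poly_Mapping.keys p. Poly_Mapping.single a (k * Poly_Mapping.lookup p a))"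
    by (subst pm_expand) (simp add: cst_def sum_distrib_left mult_single)
  then have "Poly_Mapping.lookup (cst k * p) t = (\<Sum>a\<in>Poly_Mapping.keys p. (k * Poly_Mapping.lookup p a when a = t))"
    by (simp add: lookup_sum lookup_single)
  also have "\<dots> = k * Poly_Mapping.lookup p t"
    by (cases "t \<in> Poly_Mapping.keys p") (auto simp: when_def in_keys_iff)
  finally show ?thesis .
qed

definition vars_in :: "nat set \<Rightarrow> mpoly \<Rightarrow> bool" where
  "vars_in V p \<longleftrightarrow> (\<forall>a\<in>Poly_Mapping.keys p. Poly_Mapping.keys a \<subseteq> V)"

definition inbox :: "nat \<Rightarrow> nat set \<Rightarrow> mpoly \<Rightarrow> bool" where
  "inbox K V p \<longleftrightarrow> (\<forall>a\<in>Poly_Mapping.keys p. Poly_Mapping.keys a \<subseteq> V \<and> (\<forall>i. Poly_Mapping.lookup a i \<le> K))"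

lemma keys_diff_pm: "Poly_Mapping.keys ((p::mpoly) - q) \<subseteq> Poly_Mapping.keys p \<union> Poly_Mapping.keys q"
  by (auto simp: in_keys_iff lookup_minus)

lemma vars_in_add: "vars_in V p \<Longrightarrow> vars_in V q \<Longrightarrow> vars_in V (p + q)"
  using keys_add[of p q] by (auto simp: vars_in_def)
lemma vars_in_diff: "vars_in V p \<Longrightarrow> vars_in V q \<Longrightarrow> vars_in V (p - q)"
  using keys_diff_pm[of p q] by (auto simp: vars_in_def)
lemma vars_in_mult: "vars_in V p \<Longrightarrow> vars_in V q \<Longrightarrow> vars_in V (p * q)"
proof (unfold vars_in_def, intro ballI)
  fix c assume p: "\<forall>a\<in>Poly_Mapping.keys p. Poly_Mapping.keys a \<subseteq> V" and q: "\<forall>a\<in>Poly_Mapping.keys q. Poly_Mapping.keys a \<subseteq> V"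
    and c: "c \<in> Poly_Mapping.keys (p * q)"
  then obtain a b where ab: "c = a + b" "a \<in> Poly_Mapping.keys p" "b \<in> Poly_Mapping.keys q" using keys_mult by blast
  then show "Poly_Mapping.keys c \<subseteq> V" using keys_add[of a b] p q by blast
qed
lemma vars_in_one: "vars_in V 1" by (simp add: vars_in_def)
lemma vars_in_zero: "vars_in V 0" by (simp add: vars_in_def)
lemma vars_in_cst: "vars_in V (cst c)" by (simp add: vars_in_def cst_def)
lemma vars_in_var: "i \<in> V \<Longrightarrow> vars_in V (var i)" by (simp add: vars_in_def var_def)
lemma vars_in_power: "vars_in V p \<Longrightarrow> vars_in V (p ^ n)"
  by (induction n) (auto intro: vars_in_mult vars_in_one)
lemma vars_in_prod: "(\<And>i. i \<in> I \<Longrightarrow> vars_in V (f i)) \<Longrightarrow> vars_in V (\<Prod>i\<in>I. f i)"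
  by (induction I rule: infinite_finite_induct) (auto intro: vars_in_mult vars_in_one)
lemma vars_in_sum: "(\<And>i. i \<in> I \<Longrightarrow> vars_in V (f i)) \<Longrightarrow> vars_in V (\<Sum>i\<in>I. f i)"
  by (induction I rule: infinite_finite_induct) (auto intro: vars_in_add vars_in_zero)

lemma inbox_mono: "inbox K V p \<Longrightarrow> K \<le> K' \<Longrightarrow> inbox K' V p"
  unfolding inbox_def by (meson order_trans)
lemma inbox_mult: "inbox K1 V p \<Longrightarrow> inbox K2 V q \<Longrightarrow> inbox (K1 + K2) V (p * q)"
  unfolding inbox_def
proof
  fix c assume p: "\<forall>a\<in>Poly_Mapping.keys p. Poly_Mapping.keys a \<subseteq> V \<and> (\<forall>i. Poly_Mapping.lookup a i \<le> K1)"
    and q: "\<forall>a\<in>Poly_Mapping.keys q. Poly_Mapping.keys a \<subseteq> V \<and> (\<forall>i. Poly_Mapping.lookup a i \<le> K2)" and c: "c \<in> Poly_Mapping.keys (p*q)"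
  then obtain a b where ab: "c = a + b" "a \<in> Poly_Mapping.keys p" "b \<in> Poly_Mapping.keys q" using keys_mult by blast
  show "Poly_Mapping.keys c \<subseteq> V \<and> (\<forall>i. Poly_Mapping.lookup c i \<le> K1 + K2)"
  proof
    show "Poly_Mapping.keys c \<subseteq> V" using keys_add[of a b] p q ab by blast
    show "\<forall>i. Poly_Mapping.lookup c i \<le> K1 + K2" using p q ab by (simp add: lookup_add add_mono)
  qed
qed
lemma inbox_one: "inbox 0 V 1" by (simp add: inbox_def)
lemma inbox_power: "inbox K V p \<Longrightarrow> inbox (n * K) V (p ^ n)"
  by (induction n) (auto intro: inbox_one dest: inbox_mult)
lemma inbox_prod: "(\<And>i. i \<in> I \<Longrightarrow> inbox (K i) V (f i)) \<Longrightarrow> inbox (\<Sum>i\<in>I. K i) V (\<Prod>i\<in>I. f i)"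
  by (induction I rule: infinite_finite_induct) (auto intro: inbox_one inbox_mult)

lemma vars_in_inbox: "vars_in V p \<Longrightarrow> \<exists>K. inbox K V p"
proof -
  assume v: "vars_in V p"
  let ?K = "\<Sum>a\<in>Poly_Mapping.keys p. \<Sum>i\<in>Poly_Mapping.keys a. Poly_Mapping.lookup a i"
  have "Poly_Mapping.lookup a i \<le> ?K" if "a \<in> Poly_Mapping.keys p" for a i
  proof (cases "i \<in> Poly_Mapping.keys a")
    case True
    have "Poly_Mapping.lookup a i \<le> (\<Sum>i\<in>Poly_Mapping.keys a. Poly_Mapping.lookup a i)" by (rule member_le_sum) (use True in auto)
    also have "\<dots> \<le> ?K" by (rule member_le_sum[where f = "\<lambda>a. \<Sum>i\<in>Poly_Mapping.keys a. Poly_Mapping.lookup a i"]) (use that in auto)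
    finally show ?thesis .
  next
    case False then show ?thesis by (simp add: in_keys_iff)
  qed
  with v show ?thesis by (intro exI[of _ ?K]) (auto simp: inbox_def vars_in_def)
qed

lemma common_box:
  fixes m :: nat
  assumes "\<And>j. j < m \<Longrightarrow> vars_in V (f j)"
  shows "\<exists>E. \<forall>j<m. inbox E V (f j)"
proof -
  from assms vars_in_inbox have "\<forall>j. \<exists>K. j < m \<longrightarrow> inbox K V (f j)" by blast
  from choice[OF this] obtain K where K0: "\<forall>j. j < m \<longrightarrow> inbox (K j) V (f j)" by blast
  then have K: "\<And>j. j < m \<Longrightarrow> inbox (K j) V (f j)" by blast
  have "inbox (\<Sum>j<m. K j) V (f j)" if "j < m" for j
    by (rule inbox_mono[OF K[OF that]]) (use that in \<open>auto intro!: member_le_sum\<close>)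
  then show ?thesis by blast
qed


section \<open>Identity theorem\<close>

lemma identity_thm:
  fixes c :: "(nat \<Rightarrow> nat) \<Rightarrow> complex"
  assumes "finite A" "\<forall>a\<in>A. \<forall>i\<ge>m. a i = 0"
    and "\<forall>z. (\<Sum>a\<in>A. c a * (\<Prod>i<m. z i ^ a i)) = 0"
  shows "\<forall>a\<in>A. c a = 0"
  using assms
proof (induction m arbitrary: A c)
  case 0
  show ?case
  proof
    fix a assume a: "a \<in> A"
    have "A \<subseteq> {\<lambda>_. 0}" using 0(2) by (auto simp: fun_eq_iff)
    with a have A: "A = {a}" by auto
    from 0(3) show "c a = 0" by (simp add: A)
  qed
next
  case (Suc m)
  define KM where "KM = Max ((\<lambda>a. a m) ` A)"
  have KM: "a m \<le> KM" if "a \<in> A" for a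
    unfolding KM_def using Suc.prems(1) that by auto
  define Ak where "Ak k = {a\<in>A. a m = k}" for k
  have inner0: "(\<Sum>a\<in>Ak k. c a * (\<Prod>i<m. z i ^ a i)) = 0" if "k \<le> KM" for z k
  proof -
    define cc where "cc k = (\<Sum>a\<in>Ak k. c a * (\<Prod>i<m. z i ^ a i))" for k
    have "(\<Sum>k\<le>KM. cc k * w ^ k) = 0" for w
    proof -
      have "0 = (\<Sum>a\<in>A. c a * (\<Prod>i<Suc m. (z(m := w)) i ^ a i))"
        using Suc.prems(3) by metis
      also have "\<dots> = (\<Sum>a\<in>A. c a * (\<Prod>i<m. z i ^ a i) * w ^ a m)"
        by (intro sum.cong) (auto simp: mult.assoc)
      also have "\<dots> = (\<Sum>k\<le>KM. \<Sum>a\<in>{a\<in>A. a m = k}. c a * (\<Prod>i<m. z i ^ a i) * w ^ a m)"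
        by (rule sum.group[symmetric]) (use Suc.prems(1) KM in auto)
      also have "\<dots> = (\<Sum>k\<le>KM. cc k * w ^ k)"
        unfolding cc_def Ak_def by (intro sum.cong refl) (auto simp: sum_distrib_right)
      finally show ?thesis by simp
    qed
    then have "\<forall>k\<le>KM. cc k = 0" using polyfun_eq_0[of cc KM] by blast
    then show ?thesis using that cc_def by auto
  qed
  show ?case
  proof
    fix a assume aA: "a \<in> A"
    let ?k = "a m"
    let ?B = "(\<lambda>b. b(m := 0)) ` Ak ?k"
    let ?cc = "\<lambda>b. c (b(m := ?k))"
    have inj: "inj_on (\<lambda>b. b(m := 0)) (Ak ?k)"
      by (rule inj_onI) (auto simp: Ak_def fun_eq_iff split: if_splits, metis)
    have "\<forall>b\<in>?B. ?cc b = 0"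
    proof (rule Suc.IH)
      show "finite ?B" using Suc.prems(1) by (auto simp: Ak_def)
      show "\<forall>b\<in>?B. \<forall>i\<ge>m. b i = 0" using Suc.prems(2) by (auto simp: Ak_def)
      show "\<forall>z. (\<Sum>b\<in>?B. ?cc b * (\<Prod>i<m. z i ^ b i)) = 0"
      proof
        fix z
        have "(\<Sum>b\<in>?B. ?cc b * (\<Prod>i<m. z i ^ b i)) = (\<Sum>a\<in>Ak ?k. ?cc (a(m:=0)) * (\<Prod>i<m. z i ^ (a(m:=0)) i))"
          by (rule sum.reindex[OF inj, unfolded comp_def])
        also have "\<dots> = (\<Sum>a\<in>Ak ?k. c a * (\<Prod>i<m. z i ^ a i))"
        proof (intro sum.cong refl)
          fix b assume "b \<in> Ak ?k"
          then have "b m = a m" by (simp add: Ak_def)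
          then have e: "(b(m:=0))(m := a m) = b" by (metis fun_upd_triv fun_upd_upd)
          have "(\<Prod>i<m. z i ^ (b(m:=0)) i) = (\<Prod>i<m. z i ^ b i)" by (intro prod.cong) auto
          then show "?cc (b(m:=0)) * (\<Prod>i<m. z i ^ (b(m:=0)) i) = c b * (\<Prod>i<m. z i ^ b i)"
            using e by simp
        qed
        also have "\<dots> = 0" using inner0 KM aA by auto
        finally show "(\<Sum>b\<in>?B. ?cc b * (\<Prod>i<m. z i ^ b i)) = 0" .
      qed
    qed
    moreover have "a(m := 0) \<in> ?B" using aA by (auto simp: Ak_def)
    ultimately have "?cc (a(m := 0)) = 0" by blast
    then show "c a = 0" by simp
  qed
qed

section \<open>Dependence lemma\<close>

lemma dep_lemma:
  fixes f :: "'a \<Rightarrow> 'b \<Rightarrow> complex"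
  assumes "finite T" "finite S" "card T < card S" "\<forall>a\<in>S. \<forall>t. t \<notin> T \<longrightarrow> f a t = 0"
  shows "\<exists>c. (\<exists>a\<in>S. c a \<noteq> 0) \<and> (\<forall>t. (\<Sum>a\<in>S. c a * f a t) = 0)"
  using assms
proof (induction T arbitrary: S f rule: finite_induct)
  case empty
  then obtain a0 where a0: "a0 \<in> S" by fastforce
  show ?case
    by (rule exI[of _ "\<lambda>a. if a = a0 then 1 else 0"]) (use a0 empty in \<open>auto intro!: sum.neutral\<close>)
next
  case (insert t0 T)
  show ?case
  proof (cases "\<forall>a\<in>S. f a t0 = 0")
    case True
    show ?thesis
    proof (rule insert.IH)
      show "finite S" "card T < card S" using insert by auto
      show "\<forall>a\<in>S. \<forall>t. t \<notin> T \<longrightarrow> f a t = 0"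
      proof (intro ballI allI impI)
        fix a t assume "a \<in> S" "t \<notin> T"
        then show "f a t = 0" using insert.prems(3) True by (cases "t = t0") auto
      qed
    qed
  next
    case False
    then obtain a0 where a0: "a0 \<in> S" "f a0 t0 \<noteq> 0" by auto
    define g where "g a t = f a t - f a t0 / f a0 t0 * f a0 t" for a t
    have "\<exists>c. (\<exists>a\<in>S - {a0}. c a \<noteq> 0) \<and> (\<forall>t. (\<Sum>a\<in>S - {a0}. c a * g a t) = 0)"
    proof (rule insert.IH)
      show "finite (S - {a0})" using insert by auto
      show "card T < card (S - {a0})" using insert a0 by (auto simp: card_Diff_singleton)
      show "\<forall>a\<in>S - {a0}. \<forall>t. t \<notin> T \<longrightarrow> g a t = 0"
      proof (intro ballI allI impI)
        fix a t assume "a \<in> S - {a0}" "t \<notin> T"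
        then show "g a t = 0" using insert.prems(3) a0 by (cases "t = t0") (auto simp: g_def)
      qed
    qed
    then obtain c' where c': "\<exists>a\<in>S - {a0}. c' a \<noteq> 0" "\<And>t. (\<Sum>a\<in>S - {a0}. c' a * g a t) = 0" by blast
    define c where "c a = (if a = a0 then - (\<Sum>b\<in>S - {a0}. c' b * f b t0) / f a0 t0 else c' a)" for a
    show ?thesis
    proof (intro exI conjI allI)
      show "\<exists>a\<in>S. c a \<noteq> 0" using c'(1) by (auto simp: c_def)
      fix t
      have fS: "finite S" using insert by auto
      have "(\<Sum>a\<in>S. c a * f a t) = c a0 * f a0 t + (\<Sum>a\<in>S - {a0}. c' a * f a t)"
        using a0 fS by (simp add: sum.remove c_def)
      also have "(\<Sum>a\<in>S - {a0}. c' a * f a t) = (\<Sum>a\<in>S - {a0}. c' a * g a t + c' a * f a t0 * (f a0 t / f a0 t0))"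
        by (intro sum.cong refl) (simp add: g_def algebra_simps)
      also have "\<dots> = (\<Sum>a\<in>S - {a0}. c' a * g a t) + (\<Sum>b\<in>S - {a0}. c' b * f b t0) * (f a0 t / f a0 t0)"
        by (simp add: sum.distrib sum_distrib_right sum_divide_distrib)
      finally show "(\<Sum>a\<in>S. c a * f a t) = 0" using c'(2)[of t] a0(2) by (simp add: c_def field_simps)
    qed
  qed
qed

definition boxset :: "nat \<Rightarrow> nat set \<Rightarrow> mono set" where
  "boxset K V = {a. Poly_Mapping.keys a \<subseteq> V \<and> (\<forall>i. Poly_Mapping.lookup a i \<le> K)}"

definition tbox :: "nat \<Rightarrow> nat \<Rightarrow> (nat \<Rightarrow> nat) set" where
  "tbox D m = {a. (\<forall>i. a i \<le> D) \<and> (\<forall>i\<ge>m. a i = 0)}"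

lemma boxset_bij:
  assumes "finite V"
  shows "bij_betw (\<lambda>a. restrict (Poly_Mapping.lookup a) V) (boxset K V) (PiE V (\<lambda>_. {..K}))"
proof (rule bij_betwI[where g = "\<lambda>f. Abs_poly_mapping (\<lambda>i. if i \<in> V then f i else 0)"])
  have fin: "finite {i. (if i \<in> V then f i else 0) \<noteq> (0::nat)}" for f
    by (rule finite_subset[OF _ assms]) auto
  have L: "Poly_Mapping.lookup (Abs_poly_mapping (\<lambda>i. if i \<in> V then f i else 0)) = (\<lambda>i. if i \<in> V then f i else 0)" for f :: "nat \<Rightarrow> nat"
    by (rule lookup_Abs_poly_mapping[OF fin])
  show "(\<lambda>a. restrict (Poly_Mapping.lookup a) V) \<in> boxset K V \<rightarrow> (V \<rightarrow>\<^sub>E {..K})"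
    unfolding boxset_def by (auto simp: restrict_PiE_iff)
  show "(\<lambda>f. Abs_poly_mapping (\<lambda>i. if i \<in> V then f i else 0)) \<in> (V \<rightarrow>\<^sub>E {..K}) \<rightarrow> boxset K V"
  proof
    fix f assume f: "f \<in> V \<rightarrow>\<^sub>E {..K}"
    show "Abs_poly_mapping (\<lambda>i. if i \<in> V then f i else 0) \<in> boxset K V"
      unfolding boxset_def mem_Collect_eq L
    proof
      show "Poly_Mapping.keys (Abs_poly_mapping (\<lambda>i. if i \<in> V then f i else 0)) \<subseteq> V"
        by (auto simp: in_keys_iff L split: if_splits)
      show "\<forall>i. (if i \<in> V then f i else 0) \<le> K" using f by (auto simp: PiE_iff)
    qed
  qed
  show "Abs_poly_mapping (\<lambda>i. if i \<in> V then restrict (Poly_Mapping.lookup a) V i else 0) = a" if "a \<in> boxset K V" for a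
  proof (rule poly_mapping_eqI)
    fix k
    show "Poly_Mapping.lookup (Abs_poly_mapping (\<lambda>i. if i \<in> V then restrict (Poly_Mapping.lookup a) V i else 0)) k = Poly_Mapping.lookup a k"
      unfolding L using that by (auto simp: boxset_def in_keys_iff)
  qed
  show "restrict (Poly_Mapping.lookup (Abs_poly_mapping (\<lambda>i. if i \<in> V then f i else 0))) V = f" if "f \<in> V \<rightarrow>\<^sub>E {..K}" for f
  proof -
    have "restrict (\<lambda>i. if i \<in> V then f i else 0) V = restrict f V" by (rule restrict_ext) simp
    also have "\<dots> = f" by (rule PiE_restrict[OF that])
    finally show ?thesis unfolding L .
  qed
qed

lemma boxset_card: "finite V \<Longrightarrow> card (boxset K V) = (K+1) ^ card V"
  using bij_betw_same_card[OF boxset_bij[of V K]] by (simp add: card_PiE)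

lemma boxset_finite: "finite V \<Longrightarrow> finite (boxset K V)"
  using bij_betw_finite[OF boxset_bij[of V K]] by (simp add: finite_PiE)

lemma tbox_bij:
  shows "bij_betw (\<lambda>a. restrict a {..<m}) (tbox D m) (PiE {..<m} (\<lambda>_. {..D}))"
proof (rule bij_betwI[where g = "\<lambda>f i. if i < m then f i else 0"])
  show "(\<lambda>a. restrict a {..<m}) \<in> tbox D m \<rightarrow> ({..<m} \<rightarrow>\<^sub>E {..D})"
    unfolding tbox_def by (auto simp: restrict_PiE_iff)
  show "(\<lambda>f i. if i < m then f i else 0) \<in> ({..<m} \<rightarrow>\<^sub>E {..D}) \<rightarrow> tbox D m"
  proof
    fix f assume f: "f \<in> {..<m} \<rightarrow>\<^sub>E {..D}"
    show "(\<lambda>i. if i < m then f i else 0) \<in> tbox D m"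
      unfolding tbox_def using f by (auto simp: PiE_iff)
  qed
  show "(\<lambda>i. if i < m then restrict a {..<m} i else 0) = a" if "a \<in> tbox D m" for a
  proof
    fix i show "(if i < m then restrict a {..<m} i else 0) = a i" using that by (auto simp: tbox_def)
  qed
  show "restrict (\<lambda>i. if i < m then f i else 0) {..<m} = f" if "f \<in> {..<m} \<rightarrow>\<^sub>E {..D}" for f
  proof -
    have "restrict (\<lambda>i. if i < m then f i else 0) {..<m} = restrict f {..<m}" by (rule restrict_ext) simp
    also have "\<dots> = f" by (rule PiE_restrict[OF that])
    finally show ?thesis .
  qed
qed

lemma tbox_card: "card (tbox D m) = (D+1) ^ m"
  using bij_betw_same_card[OF tbox_bij[of m D]] by (simp add: card_PiE)

lemma tbox_finite: "finite (tbox D m)"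
  using bij_betw_finite[OF tbox_bij[of m D]] by (simp add: finite_PiE)

lemma pow_diff_bound: "(y::nat) \<le> x \<Longrightarrow> x ^ n \<le> y ^ n + n * (x - y) * x ^ (n - 1)"
proof (induction n)
  case 0 then show ?case by simp
next
  case (Suc n)
  have "x ^ Suc n = x * x ^ n" by simp
  also have "\<dots> \<le> x * (y ^ n + n * (x - y) * x ^ (n - 1))" using Suc by simp
  also have "\<dots> = x * y ^ n + n * (x - y) * (x * x ^ (n - 1))" by (simp add: algebra_simps)
  also have "n * (x - y) * (x * x ^ (n - 1)) = n * (x - y) * x ^ n"
    by (cases n) auto
  finally have 1: "x ^ Suc n \<le> x * y ^ n + n * (x - y) * x ^ n" .
  have "x = y + (x - y)" using Suc.prems by simp
  then have "x * y ^ n = y * y ^ n + (x - y) * y ^ n" by (metis distrib_right)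
  also have "(x - y) * y ^ n \<le> (x - y) * x ^ n"
    using Suc.prems by (simp add: power_mono)
  finally have 2: "x * y ^ n \<le> y ^ Suc n + (x - y) * x ^ n" by simp
  have 3: "Suc n * (x - y) * x ^ (Suc n - 1) = (x - y) * x ^ n + n * (x - y) * x ^ n" by (simp add: distrib_right)
  show ?case using 1 2 3 by linarith
qed

lemma count_arith:
  fixes m m' E q :: nat
  assumes "m' \<le> m"
  shows "\<exists>D. (E * (m * D) + q + 1) ^ m' < (D + 1) ^ m + (E * (m * D) + 1) ^ m'"
proof (cases "m' = 0")
  case True then show ?thesis by simp
next
  case False
  then have m1: "m \<ge> 1" using assms by simp
  define C where "C = E * m + q + 1"
  define D where "D = m * q * C ^ (m - 1) + 1"
  define A where "A = E * (m * D) + 1"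
  have D1: "D \<ge> 1" by (simp add: D_def)
  have "(A + q) ^ m' \<le> A ^ m' + m' * q * (A + q) ^ (m' - 1)"
    using pow_diff_bound[of A "A + q" m'] by simp
  also have "(A + q) ^ (m' - 1) \<le> (C * D) ^ (m - 1)"
  proof -
    have h1: "q + 1 \<le> (q + 1) * D" by (metis D1 mult.right_neutral mult_le_mono2)
    have "A + q = E * m * D + (q + 1)" by (simp add: A_def)
    also have "\<dots> \<le> E * m * D + (q + 1) * D" using h1 by simp
    also have "\<dots> = C * D" by (simp add: C_def algebra_simps)
    finally have "A + q \<le> C * D" .
    then have "(A + q) ^ (m' - 1) \<le> (C * D) ^ (m' - 1)" by (simp add: power_mono)
    also have "\<dots> \<le> (C * D) ^ (m - 1)"
      using assms D1 by (intro power_increasing) (auto simp: C_def)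
    finally show ?thesis .
  qed
  then have "m' * q * (A + q) ^ (m' - 1) \<le> m * q * (C * D) ^ (m - 1)"
    using assms by (intro mult_mono) auto
  also have "\<dots> = (m * q * C ^ (m - 1)) * D ^ (m - 1)" by (simp add: power_mult_distrib mult_ac)
  also have "\<dots> = (D - 1) * D ^ (m - 1)" by (simp add: D_def)
  also have "\<dots> < D * D ^ (m - 1)"
  proof (rule mult_less_mono1)
    show "D - 1 < D" using D1 by simp
    show "0 < D ^ (m - 1)" using D1 by simp
  qed
  also have "D * D ^ (m - 1) = D ^ m" using m1 by (cases m) auto
  also have "\<dots> \<le> (D + 1) ^ m" by (simp add: power_mono)
  finally have "(A + q) ^ m' < A ^ m' + (D + 1) ^ m" by simp
  then show ?thesis by (intro exI[of _ D]) (simp add: A_def add.commute add.left_commute)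
qed


lemma single_as_cst: "Poly_Mapping.single b k = cst k * (Poly_Mapping.single b 1 :: mpoly)"
  by (simp add: cst_def mult_single)

lemma key_lemma:
  fixes \<psi> :: "nat \<Rightarrow> mpoly" and h Q :: mpoly and V :: "nat set" and m :: nat
  assumes V: "finite V" "card V \<le> m"
    and v\<psi>: "\<And>j. j < m \<Longrightarrow> vars_in V (\<psi> j)" and vh: "vars_in V h" and vQ: "vars_in V Q"
    and Q0: "Q \<noteq> 0"
  shows "\<exists>A c. finite A \<and> (\<forall>a\<in>A. \<forall>i\<ge>m. a i = 0) \<and> (\<exists>a\<in>A. c a \<noteq> 0) \<and>
     (\<forall>y. pev y Q = 0 \<longrightarrow> pev y h \<noteq> 0 \<longrightarrow>
        (\<Sum>a\<in>A. c a * (\<Prod>i<m. (pev y (\<psi> i) / pev y h) ^ a i)) = 0)"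
proof -
  have "\<exists>E. \<forall>j<Suc m. inbox E V ((\<lambda>j. if j < m then \<psi> j else h) j)"
    by (rule common_box) (use v\<psi> vh in auto)
  then obtain E where E: "\<forall>j<Suc m. inbox E V ((\<lambda>j. if j < m then \<psi> j else h) j)" by blast
  have E\<psi>: "inbox E V (\<psi> j)" if "j < m" for j using E that by (metis less_Suc_eq)
  have Eh: "inbox E V h" using E by (metis lessI less_irrefl)
  obtain q where q: "inbox q V Q" using vars_in_inbox vQ by blast
  obtain D where D: "(E * (m * D) + q + 1) ^ card V < (D + 1) ^ m + (E * (m * D) + 1) ^ card V"
    using count_arith[OF V(2)] by blast
  define L where "L = m * D"
  define K where "K = E * L + q"
  define comp where "comp a = (\<Prod>j<m. \<psi> j ^ a j) * h ^ (L - (\<Sum>j<m. a j))" for a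
  have sumle: "(\<Sum>j<m. a j) \<le> L" if "a \<in> tbox D m" for a
  proof -
    have "(\<Sum>j<m. a j) \<le> of_nat (card {..<m}) * D"
      by (rule sum_bounded_above) (use that in \<open>auto simp: tbox_def\<close>)
    then show ?thesis by (simp add: L_def)
  qed
  have comp_box: "inbox (E * L) V (comp a)" if "a \<in> tbox D m" for a
  proof -
    have 1: "inbox (\<Sum>j<m. a j * E) V (\<Prod>j<m. \<psi> j ^ a j)"
      by (rule inbox_prod) (auto intro: inbox_power E\<psi>)
    have 2: "inbox ((L - (\<Sum>j<m. a j)) * E) V (h ^ (L - (\<Sum>j<m. a j)))"
      by (rule inbox_power[OF Eh])
    have "inbox ((\<Sum>j<m. a j * E) + (L - (\<Sum>j<m. a j)) * E) V (comp a)"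
      unfolding comp_def by (rule inbox_mult[OF 1 2])
    moreover have "(\<Sum>j<m. a j * E) + (L - (\<Sum>j<m. a j)) * E = E * L"
    proof -
      have s1: "(\<Sum>j<m. a j * E) = (\<Sum>j<m. a j) * E" by (simp add: sum_distrib_right)
      have "(\<Sum>j<m. a j) + (L - (\<Sum>j<m. a j)) = L" using sumle[OF that] by simp
      then have "((\<Sum>j<m. a j) + (L - (\<Sum>j<m. a j))) * E = L * E" by simp
      then show ?thesis unfolding s1 by (metis add_mult_distrib mult.commute)
    qed
    ultimately show ?thesis by simp
  qed
  have boxsub: "boxset (E * L) V \<subseteq> boxset K V" by (auto simp: boxset_def K_def intro: le_trans)
  define S where "S = Inl ` tbox D m \<union> Inr ` boxset (E * L) V"
  define f where "f x = (case x of Inl a \<Rightarrow> Poly_Mapping.lookup (comp a) | Inr b \<Rightarrow> Poly_Mapping.lookup (Q * Poly_Mapping.single b 1))" for x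
  have finS: "finite S" unfolding S_def using tbox_finite boxset_finite[OF V(1)] by auto
  have cardS: "card S = (D + 1) ^ m + (E * L + 1) ^ card V"
  proof -
    have "card S = card (Inl ` tbox D m :: ((nat \<Rightarrow> nat) + mono) set) + card (Inr ` boxset (E * L) V :: ((nat \<Rightarrow> nat) + mono) set)"
      unfolding S_def by (rule card_Un_disjoint) (use tbox_finite boxset_finite[OF V(1)] in auto)
    also have "\<dots> = card (tbox D m) + card (boxset (E * L) V)"
      by (simp add: card_image)
    finally show ?thesis using tbox_card boxset_card[OF V(1)] by simp
  qed
  have cardT: "card (boxset K V) < card S"
    using D cardS boxset_card[OF V(1), of K] by (simp add: K_def L_def)
  have supp: "\<forall>x\<in>S. \<forall>t. t \<notin> boxset K V \<longrightarrow> f x t = 0"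
  proof (intro ballI allI impI)
    fix x t assume x: "x \<in> S" and t: "t \<notin> boxset K V"
    show "f x t = 0"
    proof (cases x)
      case (Inl a)
      then have a: "a \<in> tbox D m" using x by (auto simp: S_def)
      show ?thesis
      proof (rule ccontr)
        assume "f x t \<noteq> 0"
        then have "t \<in> Poly_Mapping.keys (comp a)" using Inl by (simp add: f_def in_keys_iff)
        then have "t \<in> boxset (E * L) V" using comp_box[OF a] by (auto simp: inbox_def boxset_def)
        then show False using t boxsub by auto
      qed
    next
      case (Inr b)
      then have b: "b \<in> boxset (E * L) V" using x by (auto simp: S_def)
      have "inbox (E * L) V (Poly_Mapping.single b 1)" using b by (simp add: inbox_def boxset_def)
      then have "inbox (q + E * L) V (Q * Poly_Mapping.single b 1)" by (rule inbox_mult[OF q])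
      then have "inbox K V (Q * Poly_Mapping.single b 1)" by (simp add: K_def add.commute)
      show ?thesis
      proof (rule ccontr)
        assume "f x t \<noteq> 0"
        then have "t \<in> Poly_Mapping.keys (Q * Poly_Mapping.single b 1)" using Inr by (simp add: f_def in_keys_iff)
        then have "t \<in> boxset K V" using \<open>inbox K V _\<close> by (auto simp: inbox_def boxset_def)
        then show False using t by auto
      qed
    qed
  qed
  obtain c where c: "\<exists>x\<in>S. c x \<noteq> 0" "\<And>t. (\<Sum>x\<in>S. c x * f x t) = 0"
    using dep_lemma[OF boxset_finite[OF V(1)] finS cardT supp] by blast
  define cP where "cP a = c (Inl a)" for a
  define cR where "cR b = c (Inr b)" for b
  have split: "(\<Sum>a\<in>tbox D m. cP a * Poly_Mapping.lookup (comp a) t) + (\<Sum>b\<in>boxset (E * L) V. cR b * Poly_Mapping.lookup (Q * Poly_Mapping.single b 1) t) = 0" for t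
  proof -
    have "(\<Sum>x\<in>S. c x * f x t) = (\<Sum>x\<in>Inl ` tbox D m. c x * f x t) + (\<Sum>x\<in>Inr ` boxset (E * L) V. c x * f x t)"
      unfolding S_def by (rule sum.union_disjoint) (use tbox_finite boxset_finite[OF V(1)] in auto)
    also have "\<dots> = (\<Sum>a\<in>tbox D m. cP a * Poly_Mapping.lookup (comp a) t) + (\<Sum>b\<in>boxset (E * L) V. cR b * Poly_Mapping.lookup (Q * Poly_Mapping.single b 1) t)"
      by (simp add: sum.reindex cP_def cR_def f_def)
    finally show ?thesis using c(2) by simp
  qed
  define Pm where "Pm = (\<Sum>a\<in>tbox D m. cst (cP a) * comp a)"
  define Rm where "Rm = (\<Sum>b\<in>boxset (E * L) V. Poly_Mapping.single b (cR b))"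
  have QR: "Q * Rm = (\<Sum>b\<in>boxset (E * L) V. cst (cR b) * (Q * Poly_Mapping.single b 1))"
    unfolding Rm_def sum_distrib_left
  proof (intro sum.cong refl)
    fix b
    have "Q * Poly_Mapping.single b (cR b) = Q * (cst (cR b) * Poly_Mapping.single b 1)"
      by (subst single_as_cst) (rule refl)
    then show "Q * Poly_Mapping.single b (cR b) = cst (cR b) * (Q * Poly_Mapping.single b 1)"
      by (simp add: mult_ac)
  qed
  have ident: "Pm + Q * Rm = 0"
  proof (rule poly_mapping_eqI)
    fix t
    show "Poly_Mapping.lookup (Pm + Q * Rm) t = Poly_Mapping.lookup 0 t"
      using split[of t] unfolding QR Pm_def by (simp add: lookup_add lookup_sum lookup_cst_mult)
  qed
  have cP_nz: "\<exists>a\<in>tbox D m. cP a \<noteq> 0"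
  proof (rule ccontr)
    assume "\<not> ?thesis"
    then have "Pm = 0" by (simp add: Pm_def cst_def)
    with ident have "Q * Rm = 0" by simp
    with Q0 have R0: "Rm = 0" by simp
    have "cR b = 0" if "b \<in> boxset (E * L) V" for b
    proof -
      have "Poly_Mapping.lookup Rm b = (\<Sum>b'\<in>boxset (E * L) V. (cR b' when b' = b))"
        by (simp add: Rm_def lookup_sum lookup_single)
      also have "\<dots> = cR b" using that boxset_finite[OF V(1)] by (simp add: when_def)
      finally show ?thesis using R0 by simp
    qed
    with \<open>\<not> ?thesis\<close> c(1) show False by (auto simp: S_def cP_def cR_def)
  qed
  show ?thesis
  proof (intro exI conjI allI impI)
    show "finite (tbox D m)" by (rule tbox_finite)
    show "\<forall>a\<in>tbox D m. \<forall>i\<ge>m. a i = 0" by (simp add: tbox_def)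
    show "\<exists>a\<in>tbox D m. cP a \<noteq> 0" by (rule cP_nz)
    fix y assume Qy: "pev y Q = 0" and hy: "pev y h \<noteq> 0"
    let ?H = "pev y h"
    have Pm0: "pev y Pm = 0"
    proof -
      have "pev y (Pm + Q * Rm) = 0" using ident by simp
      then show ?thesis using Qy by (simp add: pev_add pev_mult)
    qed
    have pc: "pev y (comp a) = ?H ^ L * (\<Prod>i<m. (pev y (\<psi> i) / ?H) ^ a i)" if "a \<in> tbox D m" for a
    proof -
      have e1: "(\<Prod>i<m. (pev y (\<psi> i) / ?H) ^ a i) = (\<Prod>i<m. pev y (\<psi> i) ^ a i) / (\<Prod>i<m. ?H ^ a i)"
        by (simp add: power_divide prod_dividef)
      have e2: "(\<Prod>i<m. ?H ^ a i) = ?H ^ (\<Sum>i<m. a i)" by (simp add: power_sum)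
      have e3: "?H ^ L = ?H ^ (\<Sum>i<m. a i) * ?H ^ (L - (\<Sum>i<m. a i))"
        using sumle[OF that] by (simp flip: power_add)
      have e4: "pev y (comp a) = (\<Prod>i<m. pev y (\<psi> i) ^ a i) * ?H ^ (L - (\<Sum>i<m. a i))"
        by (simp add: comp_def pev_mult pev_prod pev_power)
      have "?H ^ (\<Sum>i<m. a i) \<noteq> 0" using hy by simp
      then show ?thesis unfolding e4 e1 e2 e3 by (simp add: field_simps)
    qed
    have "pev y Pm = (\<Sum>a\<in>tbox D m. cP a * pev y (comp a))" by (simp add: Pm_def pev_sum pev_mult)
    also have "\<dots> = ?H ^ L * (\<Sum>a\<in>tbox D m. cP a * (\<Prod>i<m. (pev y (\<psi> i) / ?H) ^ a i))"
      unfolding sum_distrib_left by (intro sum.cong refl) (simp add: pc)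
    finally show "(\<Sum>a\<in>tbox D m. cP a * (\<Prod>i<m. (pev y (\<psi> i) / ?H) ^ a i)) = 0"
      using Pm0 hy by simp
  qed
qed


lemma kernel_param:
  fixes N :: "nat \<Rightarrow> nat \<Rightarrow> complex" and s :: nat and C :: "nat set"
  assumes "finite C" and "\<forall>a. (\<forall>j\<in>C. (\<Sum>i<s. a i * N i j) = 0) \<longrightarrow> (\<forall>i<s. a i = 0)"
  shows "\<exists>I \<phi>. I \<subseteq> C \<and> card I + s = card C \<and>
    (\<forall>v. (\<forall>i<s. (\<Sum>j\<in>C. N i j * v j) = 0) \<longrightarrow> (\<forall>l\<in>C. v l = (\<Sum>k\<in>I. \<phi> l k * v k)))"
  using assms
proof (induction s arbitrary: N C)
  case 0
  show ?case
  proof (intro exI conjI allI impI ballI)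
    show "C \<subseteq> C" "card C + 0 = card C" by auto
    fix v :: "nat \<Rightarrow> complex" and l assume "l \<in> C"
    have "(\<Sum>k\<in>C. (if l = k then 1 else 0) * v k) = (\<Sum>k\<in>C. if l = k then v k else 0)"
      by (rule sum.cong) auto
    also have "\<dots> = v l" using \<open>l \<in> C\<close> 0(1) by simp
    finally show "v l = (\<Sum>k\<in>C. (if l = k then 1 else 0) * v k)" by simp
  qed
next
  case (Suc s)
  have "\<exists>j0\<in>C. N s j0 \<noteq> 0"
  proof (rule ccontr)
    assume "\<not> ?thesis"
    then have "\<forall>j\<in>C. (\<Sum>i<Suc s. (if i = s then 1 else 0) * N i j) = 0" by simp
    then have "\<forall>i<Suc s. (if i = s then 1 else (0::complex)) = 0"
      using Suc.prems(2)[rule_format, of "\<lambda>i. if i = s then 1 else 0"] by blast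
    then have "(if s = s then 1 else (0::complex)) = 0" by blast
    then show False by simp
  qed
  then obtain j0 where j0: "j0 \<in> C" "N s j0 \<noteq> 0" by blast
  define N' where "N' i j = N i j - N i j0 * N s j / N s j0" for i j
  define C' where "C' = C - {j0}"
  have rank': "\<forall>a. (\<forall>j\<in>C'. (\<Sum>i<s. a i * N' i j) = 0) \<longrightarrow> (\<forall>i<s. a i = 0)"
  proof (rule allI, rule impI)
    fix a assume a: "\<forall>j\<in>C'. (\<Sum>i<s. a i * N' i j) = 0"
    define a' where "a' = a(s := - (\<Sum>i<s. a i * N i j0) / N s j0)"
    have "\<forall>j\<in>C. (\<Sum>i<Suc s. a' i * N i j) = 0"
    proof
      fix j assume j: "j \<in> C"
      have "(\<Sum>i<Suc s. a' i * N i j) = (\<Sum>i<s. a i * N i j) - (\<Sum>i<s. a i * N i j0) / N s j0 * N s j"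
        by (simp add: a'_def)
      also have "\<dots> = 0"
      proof (cases "j = j0")
        case True then show ?thesis using j0 by simp
      next
        case False
        then have "j \<in> C'" using j by (simp add: C'_def)
        then have "(\<Sum>i<s. a i * N' i j) = 0" using a by blast
        moreover have "(\<Sum>i<s. a i * N' i j) = (\<Sum>i<s. a i * N i j - a i * N i j0 * (N s j / N s j0))"
          by (intro sum.cong refl) (simp add: N'_def right_diff_distrib)
        moreover have "(\<Sum>i<s. a i * N i j - a i * N i j0 * (N s j / N s j0)) = (\<Sum>i<s. a i * N i j) - (\<Sum>i<s. a i * N i j0) * (N s j / N s j0)"
          by (simp add: sum_subtractf sum_distrib_right sum_divide_distrib)
        ultimately show ?thesis by (simp add: mult_ac)
      qed
      finally show "(\<Sum>i<Suc s. a' i * N i j) = 0" .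
    qed
    then have "\<forall>i<Suc s. a' i = 0" using Suc.prems(2) by blast
    then have A: "\<And>i. i < Suc s \<Longrightarrow> a' i = 0" by blast
    show "\<forall>i<s. a i = 0"
    proof (intro allI impI)
      fix i assume i: "i < s"
      then have "a' i = 0" using A by simp
      then show "a i = 0" using i by (simp add: a'_def)
    qed
  qed
  have finC': "finite C'" using Suc.prems(1) by (simp add: C'_def)
  have "\<exists>I \<phi>. I \<subseteq> C' \<and> card I + s = card C' \<and>
    (\<forall>v. (\<forall>i<s. (\<Sum>j\<in>C'. N' i j * v j) = 0) \<longrightarrow> (\<forall>l\<in>C'. v l = (\<Sum>k\<in>I. \<phi> l k * v k)))"
    by (rule Suc.IH[OF finC' rank'])
  then obtain I \<phi>' where I: "I \<subseteq> C'" "card I + s = card C'"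
    and \<phi>'0: "\<forall>v. (\<forall>i<s. (\<Sum>j\<in>C'. N' i j * v j) = 0) \<longrightarrow> (\<forall>l\<in>C'. v l = (\<Sum>k\<in>I. \<phi>' l k * v k))"
    by blast
  have \<phi>': "\<forall>l\<in>C'. v l = (\<Sum>k\<in>I. \<phi>' l k * v k)" if "\<forall>i<s. (\<Sum>j\<in>C'. N' i j * v j) = 0" for v
    using \<phi>'0 that by blast
  define \<phi> where "\<phi> l k = (if l = j0 then - (\<Sum>j\<in>C'. N s j * \<phi>' j k) / N s j0 else \<phi>' l k)" for l k
  show ?case
  proof (intro exI conjI allI impI ballI)
    show "I \<subseteq> C" using I(1) by (auto simp: C'_def)
    have "card C > 0" using j0(1) Suc.prems(1) card_gt_0_iff by blast
    then show "card I + Suc s = card C" using I(2) j0(1) Suc.prems(1) by (simp add: C'_def card_Diff_singleton)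
    fix v :: "nat \<Rightarrow> complex" and l assume v: "\<forall>i<Suc s. (\<Sum>j\<in>C. N i j * v j) = 0" and l: "l \<in> C"
    have splitC: "(\<Sum>j\<in>C. g j) = g j0 + (\<Sum>j\<in>C'. g j)" for g :: "nat \<Rightarrow> complex"
      using j0(1) Suc.prems(1) by (simp add: C'_def sum.remove)
    have vj0: "v j0 = - (\<Sum>j\<in>C'. N s j * v j) / N s j0"
    proof -
      have "N s j0 * v j0 + (\<Sum>j\<in>C'. N s j * v j) = 0" using v splitC[of "\<lambda>j. N s j * v j"] by auto
      then have "v j0 * N s j0 = - (\<Sum>j\<in>C'. N s j * v j)" by (simp add: eq_neg_iff_add_eq_0 mult.commute)
      then show ?thesis using j0(2) by (metis minus_divide_left nonzero_mult_div_cancel_right)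
    qed
    have "\<forall>i<s. (\<Sum>j\<in>C'. N' i j * v j) = 0"
    proof (intro allI impI)
      fix i assume i: "i < s"
      have "(\<Sum>j\<in>C'. N' i j * v j) = (\<Sum>j\<in>C'. N i j * v j - N i j0 / N s j0 * (N s j * v j))"
        by (intro sum.cong refl) (simp add: N'_def left_diff_distrib)
      also have "\<dots> = (\<Sum>j\<in>C'. N i j * v j) - N i j0 / N s j0 * (\<Sum>j\<in>C'. N s j * v j)"
        by (simp add: sum_subtractf sum_distrib_left)
      also have "N i j0 / N s j0 * (\<Sum>j\<in>C'. N s j * v j) = - (N i j0 * v j0)"
        unfolding vj0 using j0(2) by simp
      also have "(\<Sum>j\<in>C'. N i j * v j) - - (N i j0 * v j0) = (\<Sum>j\<in>C'. N i j * v j) + N i j0 * v j0"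
        by simp
      also have "\<dots> = (\<Sum>j\<in>C. N i j * v j)" using splitC[of "\<lambda>j. N i j * v j"] by simp
      also have "\<dots> = 0" using v i by simp
      finally show "(\<Sum>j\<in>C'. N' i j * v j) = 0" .
    qed
    then have vC': "\<forall>l\<in>C'. v l = (\<Sum>k\<in>I. \<phi>' l k * v k)" using \<phi>' by blast
    show "v l = (\<Sum>k\<in>I. \<phi> l k * v k)"
    proof (cases "l = j0")
      case True
      have e1: "(\<Sum>j\<in>C'. N s j * v j) = (\<Sum>j\<in>C'. N s j * (\<Sum>k\<in>I. \<phi>' j k * v k))"
        by (rule sum.cong) (use vC' in auto)
      have "(\<Sum>j\<in>C'. N s j * (\<Sum>k\<in>I. \<phi>' j k * v k)) = (\<Sum>j\<in>C'. \<Sum>k\<in>I. N s j * \<phi>' j k * v k)"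
        by (simp add: sum_distrib_left mult.assoc)
      also have "\<dots> = (\<Sum>k\<in>I. \<Sum>j\<in>C'. N s j * \<phi>' j k * v k)" by (rule sum.swap)
      also have "\<dots> = (\<Sum>k\<in>I. (\<Sum>j\<in>C'. N s j * \<phi>' j k) * v k)" by (simp add: sum_distrib_right)
      finally have e2: "(\<Sum>j\<in>C'. N s j * (\<Sum>k\<in>I. \<phi>' j k * v k)) = (\<Sum>k\<in>I. (\<Sum>j\<in>C'. N s j * \<phi>' j k) * v k)" .
      have e3: "(\<Sum>k\<in>I. \<phi> j0 k * v k) = (\<Sum>k\<in>I. - ((\<Sum>j\<in>C'. N s j * \<phi>' j k) * v k) / N s j0)"
        by (intro sum.cong refl) (simp add: \<phi>_def)
      have "v j0 = - (\<Sum>k\<in>I. (\<Sum>j\<in>C'. N s j * \<phi>' j k) * v k) / N s j0"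
        using vj0 e1 e2 by simp
      also have "\<dots> = (\<Sum>k\<in>I. \<phi> j0 k * v k)"
        unfolding e3 by (simp add: sum_divide_distrib sum_negf)
      finally show ?thesis using True by simp
    next
      case False
      then show ?thesis using vC' l by (simp add: \<phi>_def C'_def)
    qed
  qed
qed


definition cdet :: "nat \<Rightarrow> (nat \<Rightarrow> nat \<Rightarrow> complex) \<Rightarrow> complex" where
  "cdet n M = (\<Sum>p\<in>{p. p permutes {0..<n}}. of_int (sign p) * (\<Prod>i=0..<n. M i (p i)))"

lemma cdet_eq: "cdet n M = Determinant.det (mat n n (\<lambda>(i,j). M i j))"
proof -
  have "Determinant.det (mat n n (\<lambda>(i,j). M i j)) = (\<Sum>p\<in>{p. p permutes {0..<n}}. of_int (sign p) * (\<Prod>i=0..<n. mat n n (\<lambda>(i,j). M i j) $$ (i, p i)))"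
    by (simp add: Determinant.det_def)
  also have "\<dots> = cdet n M"
    unfolding cdet_def
  proof (intro sum.cong refl)
    fix p assume "p \<in> {p. p permutes {0..<n}}"
    then have p: "p permutes {0..<n}" by simp
    have "(\<Prod>i=0..<n. mat n n (\<lambda>(i,j). M i j) $$ (i, p i)) = (\<Prod>i=0..<n. M i (p i))"
    proof (intro prod.cong refl)
      fix i assume "i \<in> {0..<n}"
      then have "i < n" "p i < n" using permutes_in_image[OF p] by auto
      then show "mat n n (\<lambda>(i,j). M i j) $$ (i, p i) = M i (p i)" by simp
    qed
    then show "of_int (sign p) * (\<Prod>i=0..<n. mat n n (\<lambda>(i,j). M i j) $$ (i, p i)) = of_int (sign p) * (\<Prod>i=0..<n. M i (p i))"
      by simp
  qed
  finally show ?thesis by simp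
qed

lemma frr_cdet: "full_row_rank n n M \<longleftrightarrow> cdet n M \<noteq> 0"
proof -
  define A where "A = mat n n (\<lambda>(j,i). M i j)"
  have A: "A \<in> carrier_mat n n" by (simp add: A_def)
  have dA: "Determinant.det A = cdet n M"
  proof -
    have "A = transpose_mat (mat n n (\<lambda>(i,j). M i j))" by (auto simp: A_def)
    then show ?thesis using det_transpose[of "mat n n (\<lambda>(i,j). M i j)" n] by (simp add: cdet_eq)
  qed
  have Av: "(A *\<^sub>v v) $ j = (\<Sum>i<n. v $ i * M i j)" if "j < n" "v \<in> carrier_vec n" for v j
    using that by (auto simp: A_def scalar_prod_def mult.commute atLeast0LessThan intro!: sum.cong)
  show ?thesis
  proof
    assume frr: "full_row_rank n n M"
    show "cdet n M \<noteq> 0"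
    proof
      assume "cdet n M = 0"
      then obtain v where v: "v \<in> carrier_vec n" "v \<noteq> 0\<^sub>v n" "A *\<^sub>v v = 0\<^sub>v n"
        using det_0_iff_vec_prod_zero[OF A] dA by auto
      have "\<forall>j<n. (\<Sum>i<n. v $ i * M i j) = 0"
      proof (intro allI impI)
        fix j assume j: "j < n"
        have "(A *\<^sub>v v) $ j = 0" using v(3) j by simp
        then show "(\<Sum>i<n. v $ i * M i j) = 0" using Av[OF j v(1)] by simp
      qed
      then have "\<forall>i<n. v $ i = 0" using frr unfolding full_row_rank_def by blast
      then have "v = 0\<^sub>v n" using v(1) by (intro eq_vecI) auto
      with v(2) show False by simp
    qed
  next
    assume d: "cdet n M \<noteq> 0"
    show "full_row_rank n n M"
      unfolding full_row_rank_def
    proof (rule allI, rule impI)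
      fix a assume a: "\<forall>j<n. (\<Sum>i<n. a i * M i j) = 0"
      define v where "v = vec n a"
      have vc: "v \<in> carrier_vec n" by (simp add: v_def)
      have "A *\<^sub>v v = 0\<^sub>v n"
      proof (rule eq_vecI)
        show "dim_vec (A *\<^sub>v v) = dim_vec (0\<^sub>v n)" by (simp add: A_def)
        fix j assume "j < dim_vec (0\<^sub>v n)"
        then have j: "j < n" by simp
        have "(A *\<^sub>v v) $ j = (\<Sum>i<n. v $ i * M i j)" by (rule Av[OF j vc])
        also have "\<dots> = (\<Sum>i<n. a i * M i j)" by (intro sum.cong refl) (simp add: v_def)
        finally show "(A *\<^sub>v v) $ j = 0\<^sub>v n $ j" using a j by simp
      qed
      then have "v = 0\<^sub>v n" using det_0_iff_vec_prod_zero[OF A] dA d vc by auto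
      then show "\<forall>i<n. a i = 0" by (auto simp: v_def vec_eq_iff)
    qed
  qed
qed


lemma prod_upd_split:
  fixes g :: "nat \<Rightarrow> complex \<Rightarrow> complex"
  assumes "j < n"
  shows "(\<Prod>k<n. g k ((x(j:=z)) k)) = g j z * (\<Prod>k\<in>{..<n}-{j}. g k (x k))"
proof -
  have "(\<Prod>k<n. g k ((x(j:=z)) k)) = g j ((x(j:=z)) j) * (\<Prod>k\<in>{..<n}-{j}. g k ((x(j:=z)) k))"
    using assms by (subst prod.remove[of "{..<n}" j]) auto
  also have "(\<Prod>k\<in>{..<n}-{j}. g k ((x(j:=z)) k)) = (\<Prod>k\<in>{..<n}-{j}. g k (x k))"
    by (intro prod.cong) auto
  finally show ?thesis by simp
qed

lemma sum_upd_split: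
  fixes g :: "nat \<Rightarrow> complex \<Rightarrow> complex"
  assumes "j < n"
  shows "(\<Sum>k<n. g k ((x(j:=z)) k)) = g j z + (\<Sum>k\<in>{..<n}-{j}. g k (x k))"
proof -
  have "(\<Sum>k<n. g k ((x(j:=z)) k)) = g j ((x(j:=z)) j) + (\<Sum>k\<in>{..<n}-{j}. g k ((x(j:=z)) k))"
    using assms by (subst sum.remove[of "{..<n}" j]) auto
  also have "(\<Sum>k\<in>{..<n}-{j}. g k ((x(j:=z)) k)) = (\<Sum>k\<in>{..<n}-{j}. g k (x k))"
    by (intro sum.cong) auto
  finally show ?thesis by simp
qed

lemma jac_f_row:
  assumes x: "x \<in> torus n" and j: "j < n" and i: "i < s"
  shows "deriv (\<lambda>z. Fsys s d r n N W B \<kappa> c (x(j:=z)) i) (x j) * x j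
    = (\<Sum>l<r. N i l * (of_int (B j l) * (\<kappa> l * monvec n B x l)))"
proof -
  have xj: "x j \<noteq> 0" using x j by (auto simp: torus_def)
  define P where "P l = (\<Prod>k\<in>{..<n}-{j}. x k powi B k l)" for l
  have mv: "monvec n B (x(j:=z)) l = z powi B j l * P l" for z l
    unfolding monvec_def P_def by (rule prod_upd_split[OF j, of "\<lambda>k w. w powi B k l"])
  have eq: "(\<lambda>z. Fsys s d r n N W B \<kappa> c (x(j:=z)) i) = (\<lambda>z. \<Sum>l<r. N i l * (\<kappa> l * (P l * z powi B j l)))"
    by (rule ext) (simp add: Fsys_def fsys_def i mv mult.commute)
  have D: "((\<lambda>z. \<Sum>l<r. N i l * (\<kappa> l * (P l * z powi B j l))) has_field_derivative
      (\<Sum>l<r. N i l * (\<kappa> l * (P l * (of_int (B j l) * x j powi (B j l - 1) * 1))))) (at (x j))"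
    by (intro DERIV_sum DERIV_cmult DERIV_power_int DERIV_ident) (use xj in auto)
  have "deriv (\<lambda>z. Fsys s d r n N W B \<kappa> c (x(j:=z)) i) (x j) =
      (\<Sum>l<r. N i l * (\<kappa> l * (P l * (of_int (B j l) * x j powi (B j l - 1) * 1))))"
    unfolding eq by (rule DERIV_imp_deriv[OF D])
  then have "deriv (\<lambda>z. Fsys s d r n N W B \<kappa> c (x(j:=z)) i) (x j) * x j =
      (\<Sum>l<r. N i l * (\<kappa> l * (P l * (of_int (B j l) * x j powi (B j l - 1) * 1))) * x j)"
    by (simp add: sum_distrib_right)
  also have "\<dots> = (\<Sum>l<r. N i l * (of_int (B j l) * (\<kappa> l * monvec n B x l)))"
  proof (intro sum.cong refl)
    fix l
    have e1: "x j powi (B j l - 1) * x j = x j powi B j l"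
      using power_int_add[of "x j" "B j l - 1" 1] xj by simp
    have e2: "monvec n B x l = x j powi B j l * P l"
      using mv[of "x j" l] by simp
    have "N i l * (\<kappa> l * (P l * (of_int (B j l) * x j powi (B j l - 1) * 1))) * x j
        = N i l * (\<kappa> l * (P l * (of_int (B j l) * (x j powi (B j l - 1) * x j))))"
      by (simp add: mult_ac)
    also have "\<dots> = N i l * (of_int (B j l) * (\<kappa> l * monvec n B x l))"
      unfolding e1 e2 by (simp add: mult_ac)
    finally show "N i l * (\<kappa> l * (P l * (of_int (B j l) * x j powi (B j l - 1) * 1))) * x j
        = N i l * (of_int (B j l) * (\<kappa> l * monvec n B x l))" .
  qed
  finally show ?thesis .
qed

lemma jac_W_row:
  assumes j: "j < n" and i: "s \<le> i" "i < s + d"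
  shows "deriv (\<lambda>z. Fsys s d r n N W B \<kappa> c (x(j:=z)) i) (x j) = W (i - s) j"
proof -
  define S where "S = (\<Sum>k\<in>{..<n}-{j}. W (i - s) k * x k)"
  have eq: "(\<lambda>z. Fsys s d r n N W B \<kappa> c (x(j:=z)) i) = (\<lambda>z. W (i - s) j * z + S - c (i - s))"
  proof (rule ext)
    fix z
    have sW: "(\<Sum>k<n. W (i - s) k * (x(j:=z)) k) = W (i - s) j * z + S"
      using sum_upd_split[OF j, of "\<lambda>k w. W (i - s) k * w" x z] by (simp only: S_def)
    show "Fsys s d r n N W B \<kappa> c (x(j:=z)) i = W (i - s) j * z + S - c (i - s)"
      using i by (simp add: Fsys_def sW del: fun_upd_apply)
  qed
  have D: "((\<lambda>z. W (i - s) j * z + S - c (i - s)) has_field_derivative W (i - s) j * 1 + 0 - 0) (at (x j))"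
    by (intro DERIV_diff DERIV_add DERIV_cmult DERIV_ident DERIV_const)
  show ?thesis unfolding eq using DERIV_imp_deriv[OF D] by simp
qed


section \<open>From coefficients to a Zariski open set\<close>

lemma prod_indicator_pow:
  fixes z :: "nat \<Rightarrow> complex"
  assumes "r \<le> m"
  shows "(\<Prod>i<m. z i ^ (if i < r then 1 else 0)) = (\<Prod>i<r. z i)"
  by (rule prod.mono_neutral_cong_right) (use assms in auto)

lemma zariski_from_coeffs:
  fixes m r :: nat and A :: "(nat \<Rightarrow> nat) set" and c :: "(nat \<Rightarrow> nat) \<Rightarrow> complex"
  assumes fin: "finite A" and supp: "\<forall>a\<in>A. \<forall>i\<ge>m. a i = 0" and nz: "\<exists>a\<in>A. c a \<noteq> 0" and rm: "r \<le> m"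
  shows "\<exists>U. zariski_open m U \<and> U \<noteq> {} \<and> (\<forall>\<alpha>\<in>U. \<alpha> \<in> cvec m \<and> (\<forall>j<r. \<alpha> j \<noteq> 0) \<and>
      (\<Sum>a\<in>A. c a * (\<Prod>i<m. \<alpha> i ^ a i)) \<noteq> 0)"
proof -
  define e where "e i = (if i < r then 1 else (0::nat))" for i
  define sh where "sh a = (\<lambda>i. a i + e i)" for a :: "nat \<Rightarrow> nat"
  define A' where "A' = sh ` A"
  define c' where "c' b = c (\<lambda>i. b i - e i)" for b
  define p where "p z = (\<Sum>b\<in>A'. c' b * (\<Prod>i<m. z i ^ b i))" for z :: "nat \<Rightarrow> complex"
  have inj: "inj_on sh A" by (rule inj_onI) (auto simp: sh_def fun_eq_iff)
  have c'sh: "c' (sh a) = c a" for a by (simp add: c'_def sh_def)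
  have pz: "p z = (\<Sum>a\<in>A. c a * (\<Prod>i<m. z i ^ a i)) * (\<Prod>i<r. z i)" for z
  proof -
    have "p z = (\<Sum>a\<in>A. c' (sh a) * (\<Prod>i<m. z i ^ sh a i))"
      unfolding p_def A'_def by (rule sum.reindex[OF inj, unfolded comp_def])
    also have "\<dots> = (\<Sum>a\<in>A. c a * (\<Prod>i<m. z i ^ a i) * (\<Prod>i<r. z i))"
    proof (intro sum.cong refl)
      fix a
      have "(\<Prod>i<m. z i ^ sh a i) = (\<Prod>i<m. z i ^ a i) * (\<Prod>i<m. z i ^ e i)"
        by (simp add: sh_def power_add prod.distrib)
      also have "(\<Prod>i<m. z i ^ e i) = (\<Prod>i<r. z i)"
        unfolding e_def by (rule prod_indicator_pow[OF rm])
      finally show "c' (sh a) * (\<Prod>i<m. z i ^ sh a i) = c a * (\<Prod>i<m. z i ^ a i) * (\<Prod>i<r. z i)"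
        by (simp add: c'sh mult_ac)
    qed
    finally show ?thesis by (simp add: sum_distrib_right)
  qed
  define U where "U = {z \<in> cvec m. p z \<noteq> 0}"
  have pf: "poly_fun m p"
    unfolding poly_fun_def
  proof (intro exI conjI)
    show "finite A'" using fin by (simp add: A'_def)
    show "\<forall>a\<in>A'. \<forall>i\<ge>m. a i = 0" using supp rm by (auto simp: A'_def sh_def e_def)
    show "p = (\<lambda>z. \<Sum>a\<in>A'. c' a * (\<Prod>i<m. z i ^ a i))" by (simp add: p_def fun_eq_iff)
  qed
  have zo: "zariski_open m U"
    unfolding zariski_open_def U_def by (rule exI[of _ "{p}"]) (use pf in auto)
  have "\<exists>z. p z \<noteq> 0"
  proof (rule ccontr)
    assume "\<not> ?thesis"
    then have "\<forall>z. (\<Sum>b\<in>A'. c' b * (\<Prod>i<m. z i ^ b i)) = 0" by (simp add: p_def)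
    moreover have "finite A'" using fin by (simp add: A'_def)
    moreover have "\<forall>a\<in>A'. \<forall>i\<ge>m. a i = 0" using supp rm by (auto simp: A'_def sh_def e_def)
    ultimately have "\<forall>b\<in>A'. c' b = 0" using identity_thm by blast
    then have "\<forall>a\<in>A. c a = 0" using c'sh by (auto simp: A'_def)
    with nz show False by blast
  qed
  then obtain z where z: "p z \<noteq> 0" by blast
  define z' where "z' i = (if i < m then z i else 0)" for i
  have "p z' = p z" unfolding p_def z'_def by (intro sum.cong refl prod.cong) auto
  moreover have "z' \<in> cvec m" by (simp add: cvec_def z'_def)
  ultimately have "z' \<in> U" using z by (simp add: U_def)
  then have "U \<noteq> {}" by blast
  moreover have "\<forall>\<alpha>\<in>U. \<alpha> \<in> cvec m \<and> (\<forall>j<r. \<alpha> j \<noteq> 0) \<and> (\<Sum>a\<in>A. c a * (\<Prod>i<m. \<alpha> i ^ a i)) \<noteq> 0"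
  proof
    fix \<alpha> assume "\<alpha> \<in> U"
    then have "\<alpha> \<in> cvec m" "(\<Sum>a\<in>A. c a * (\<Prod>i<m. \<alpha> i ^ a i)) * (\<Prod>i<r. \<alpha> i) \<noteq> 0"
      by (auto simp: U_def pz)
    then show "\<alpha> \<in> cvec m \<and> (\<forall>j<r. \<alpha> j \<noteq> 0) \<and> (\<Sum>a\<in>A. c a * (\<Prod>i<m. \<alpha> i ^ a i)) \<noteq> 0"
      by auto
  qed
  ultimately show ?thesis using zo by blast
qed

lemma generic_assembly:
  fixes G :: "(nat \<Rightarrow> complex) \<Rightarrow> (nat \<Rightarrow> complex) \<Rightarrow> (nat \<Rightarrow> complex)"
    and t n m r :: nat and V :: "nat set" and \<psi> :: "nat \<Rightarrow> mpoly" and h Q :: mpoly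
  assumes V: "finite V" "card V \<le> m" and rm: "r \<le> m"
    and v\<psi>: "\<And>j. j < m \<Longrightarrow> vars_in V (\<psi> j)" and vh: "vars_in V h" and vQ: "vars_in V Q" and Q0: "Q \<noteq> 0"
    and cover: "\<And>\<alpha> x. \<alpha> \<in> cvec m \<Longrightarrow> (\<forall>j<r. \<alpha> j \<noteq> 0) \<Longrightarrow> x \<in> torus n \<Longrightarrow> (\<forall>i<t. G \<alpha> x i = 0) \<Longrightarrow>
        \<not> full_row_rank t n (jac G \<alpha> x) \<Longrightarrow>
        \<exists>y. pev y Q = 0 \<and> pev y h \<noteq> 0 \<and> (\<forall>j<m. \<alpha> j = pev y (\<psi> j) / pev y h)"
  shows "\<exists>U. zariski_open m U \<and> U \<noteq> {} \<and> (\<forall>\<alpha>\<in>U. \<forall>x\<in>torus n. (\<forall>i<t. G \<alpha> x i = 0) \<longrightarrow> nondeg_sol t n G \<alpha> x)"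
proof -
  have "\<exists>A c. finite A \<and> (\<forall>a\<in>A. \<forall>i\<ge>m. a i = 0) \<and> (\<exists>a\<in>A. c a \<noteq> 0) \<and>
     (\<forall>y. pev y Q = 0 \<longrightarrow> pev y h \<noteq> 0 \<longrightarrow>
        (\<Sum>a\<in>A. c a * (\<Prod>i<m. (pev y (\<psi> i) / pev y h) ^ a i)) = 0)"
    by (rule key_lemma) (use V v\<psi> vh vQ Q0 in auto)
  then obtain A c where AC: "finite A \<and> (\<forall>a\<in>A. \<forall>i\<ge>m. a i = 0) \<and> (\<exists>a\<in>A. c a \<noteq> 0) \<and>
     (\<forall>y. pev y Q = 0 \<longrightarrow> pev y h \<noteq> 0 \<longrightarrow>
        (\<Sum>a\<in>A. c a * (\<Prod>i<m. (pev y (\<psi> i) / pev y h) ^ a i)) = 0)"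
    by (elim exE)
  then have A: "finite A" "\<forall>a\<in>A. \<forall>i\<ge>m. a i = 0" "\<exists>a\<in>A. c a \<noteq> 0" by blast+
  have van: "(\<Sum>a\<in>A. c a * (\<Prod>i<m. (pev y (\<psi> i) / pev y h) ^ a i)) = 0" if "pev y Q = 0" "pev y h \<noteq> 0" for y
    using AC that by blast
  from zariski_from_coeffs[OF A rm] obtain U where UU: "zariski_open m U \<and> U \<noteq> {} \<and>
      (\<forall>\<alpha>\<in>U. \<alpha> \<in> cvec m \<and> (\<forall>j<r. \<alpha> j \<noteq> 0) \<and> (\<Sum>a\<in>A. c a * (\<Prod>i<m. \<alpha> i ^ a i)) \<noteq> 0)"
    by (elim exE)
  then have U: "zariski_open m U" "U \<noteq> {}"
    and UP: "\<forall>\<alpha>\<in>U. \<alpha> \<in> cvec m \<and> (\<forall>j<r. \<alpha> j \<noteq> 0) \<and> (\<Sum>a\<in>A. c a * (\<Prod>i<m. \<alpha> i ^ a i)) \<noteq> 0"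
    by blast+
  have "\<forall>\<alpha>\<in>U. \<forall>x\<in>torus n. (\<forall>i<t. G \<alpha> x i = 0) \<longrightarrow> nondeg_sol t n G \<alpha> x"
  proof (intro ballI impI)
    fix \<alpha> x assume \<alpha>: "\<alpha> \<in> U" and x: "x \<in> torus n" and sol: "\<forall>i<t. G \<alpha> x i = 0"
    have "full_row_rank t n (jac G \<alpha> x)"
    proof (rule ccontr)
      assume "\<not> ?thesis"
      note nfr = this
      from UP \<alpha> have \<alpha>c: "\<alpha> \<in> cvec m" and \<alpha>nz: "\<forall>j<r. \<alpha> j \<noteq> 0"
        and \<alpha>s: "(\<Sum>a\<in>A. c a * (\<Prod>i<m. \<alpha> i ^ a i)) \<noteq> 0" by auto
      obtain y where y: "pev y Q = 0" "pev y h \<noteq> 0" "\<forall>j<m. \<alpha> j = pev y (\<psi> j) / pev y h"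
        using cover[OF \<alpha>c \<alpha>nz x sol nfr] by blast
      have "(\<Sum>a\<in>A. c a * (\<Prod>i<m. \<alpha> i ^ a i)) = (\<Sum>a\<in>A. c a * (\<Prod>i<m. (pev y (\<psi> i) / pev y h) ^ a i))"
      proof (rule sum.cong[OF refl])
        fix a
        have "(\<Prod>i<m. \<alpha> i ^ a i) = (\<Prod>i<m. (pev y (\<psi> i) / pev y h) ^ a i)"
          by (rule prod.cong[OF refl]) (use y(3) in simp)
        then show "c a * (\<Prod>i<m. \<alpha> i ^ a i) = c a * (\<Prod>i<m. (pev y (\<psi> i) / pev y h) ^ a i)" by simp
      qed
      also have "\<dots> = 0" using van[OF y(1) y(2)] .
      finally show False using \<alpha>s by simp
    qed
    then show "nondeg_sol t n G \<alpha> x" using x sol by (simp add: nondeg_sol_def)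
  qed
  then show ?thesis using U by blast
qed

definition detp :: "nat \<Rightarrow> (nat \<Rightarrow> nat \<Rightarrow> mpoly) \<Rightarrow> mpoly" where
  "detp n M = (\<Sum>p\<in>{p. p permutes {0..<n}}. cst (of_int (sign p)) * (\<Prod>i=0..<n. M i (p i)))"

lemma pev_detp: "pev y (detp n M) = cdet n (\<lambda>i j. pev y (M i j))"
  by (simp add: detp_def cdet_def pev_sum pev_mult pev_prod)

lemma vars_in_detp:
  assumes "\<And>i j. i < n \<Longrightarrow> j < n \<Longrightarrow> vars_in V (M i j)"
  shows "vars_in V (detp n M)"
  unfolding detp_def
proof (intro vars_in_sum vars_in_mult vars_in_cst vars_in_prod)
  fix p i assume "p \<in> {p. p permutes {0..<n}}" "i \<in> {0..<n}"
  then have "i < n" "p i < n" using permutes_in_image[of p "{0..<n}" i] by auto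
  then show "vars_in V (M i (p i))" by (rule assms)
qed

definition Vp :: "(nat \<Rightarrow> nat \<Rightarrow> complex) \<Rightarrow> nat set \<Rightarrow> nat \<Rightarrow> mpoly" where
  "Vp \<phi> I l = (\<Sum>k\<in>I. cst (\<phi> l k) * var k)"

definition hp :: "nat \<Rightarrow> nat \<Rightarrow> (nat \<Rightarrow> mpoly) \<Rightarrow> mpoly" where
  "hp n E Xp = (\<Prod>i<n. Xp i) ^ E"

definition kp :: "nat \<Rightarrow> (nat \<Rightarrow> nat \<Rightarrow> int) \<Rightarrow> nat \<Rightarrow> (nat \<Rightarrow> nat \<Rightarrow> complex) \<Rightarrow> nat set \<Rightarrow> (nat \<Rightarrow> mpoly) \<Rightarrow> nat \<Rightarrow> mpoly" where
  "kp n B E \<phi> I Xp l = Vp \<phi> I l * (\<Prod>i<n. Xp i ^ nat (int E - B i l))"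

definition Mp :: "nat \<Rightarrow> nat \<Rightarrow> (nat \<Rightarrow> nat \<Rightarrow> complex) \<Rightarrow> (nat \<Rightarrow> nat \<Rightarrow> complex) \<Rightarrow> (nat \<Rightarrow> nat \<Rightarrow> int)
    \<Rightarrow> (nat \<Rightarrow> nat \<Rightarrow> complex) \<Rightarrow> nat set \<Rightarrow> (nat \<Rightarrow> mpoly) \<Rightarrow> nat \<Rightarrow> nat \<Rightarrow> mpoly" where
  "Mp s r N W B \<phi> I Xp i j = (if i < s then (\<Sum>l<r. cst (N i l * of_int (B j l)) * Vp \<phi> I l)
      else cst (W (i - s) j) * Xp j)"

lemma vars_in_Vp: "I \<subseteq> V \<Longrightarrow> vars_in V (Vp \<phi> I l)"
  unfolding Vp_def by (intro vars_in_sum vars_in_mult vars_in_cst vars_in_var) auto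

lemma vars_in_hp: "(\<And>i. i < n \<Longrightarrow> vars_in V (Xp i)) \<Longrightarrow> vars_in V (hp n E Xp)"
  unfolding hp_def by (intro vars_in_power vars_in_prod) auto

lemma vars_in_kp: "I \<subseteq> V \<Longrightarrow> (\<And>i. i < n \<Longrightarrow> vars_in V (Xp i)) \<Longrightarrow> vars_in V (kp n B E \<phi> I Xp l)"
  unfolding kp_def by (intro vars_in_mult vars_in_Vp vars_in_prod vars_in_power) auto

lemma vars_in_Mp: "I \<subseteq> V \<Longrightarrow> vars_in V (Xp j) \<Longrightarrow> vars_in V (Mp s r N W B \<phi> I Xp i j)"
  unfolding Mp_def by (auto intro!: vars_in_sum vars_in_mult vars_in_cst vars_in_Vp)

lemma laurent:
  fixes x :: complex
  assumes "x \<noteq> 0" "b \<le> int E"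
  shows "x powi b * x ^ nat (int E - b) = x ^ E"
proof -
  have "x ^ nat (int E - b) = x powi (int E - b)" using assms(2) by (simp add: power_int_def)
  then have "x powi b * x ^ nat (int E - b) = x powi (b + (int E - b))"
    using power_int_add[of x b "int E - b"] assms(1) by simp
  then show ?thesis by simp
qed

lemma core_eval:
  fixes x :: "nat \<Rightarrow> complex" and y :: "nat \<Rightarrow> complex"
  assumes x: "x \<in> torus n" and E: "\<forall>i<n. \<forall>l<r. B i l \<le> int E"
    and ker: "\<forall>l<r. \<kappa> l * monvec n B x l = (\<Sum>k\<in>I. \<phi> l k * y k)"
    and yx: "\<forall>i<n. pev y (Xp i) = x i"
  shows "pev y (hp n E Xp) \<noteq> 0"
    and "\<forall>l<r. pev y (kp n B E \<phi> I Xp l) = \<kappa> l * pev y (hp n E Xp)"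
    and "pev y (detp n (Mp s r N W B \<phi> I Xp)) = cdet n (\<lambda>i j. if i < s then (\<Sum>l<r. N i l * (of_int (B j l) * (\<kappa> l * monvec n B x l))) else W (i - s) j * x j)"
proof -
  have xnz: "\<And>i. i < n \<Longrightarrow> x i \<noteq> 0" using x by (auto simp: torus_def)
  have pX: "(\<Prod>i<n. f (pev y (Xp i)) i) = (\<Prod>i<n. f (x i) i)" for f :: "complex \<Rightarrow> nat \<Rightarrow> complex"
    by (rule prod.cong[OF refl]) (use yx in simp)
  have ph: "pev y (hp n E Xp) = (\<Prod>i<n. x i) ^ E"
    using pX[of "\<lambda>w i. w"] by (simp add: hp_def pev_power pev_prod)
  show "pev y (hp n E Xp) \<noteq> 0" unfolding ph using xnz by auto
  have pV: "pev y (Vp \<phi> I l) = \<kappa> l * monvec n B x l" if "l < r" for l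
  proof -
    have "pev y (Vp \<phi> I l) = (\<Sum>k\<in>I. \<phi> l k * y k)" by (simp add: Vp_def pev_sum pev_mult)
    then show ?thesis using ker that by simp
  qed
  show "\<forall>l<r. pev y (kp n B E \<phi> I Xp l) = \<kappa> l * pev y (hp n E Xp)"
  proof (intro allI impI)
    fix l assume l: "l < r"
    have "pev y (kp n B E \<phi> I Xp l) = pev y (Vp \<phi> I l) * (\<Prod>i<n. pev y (Xp i) ^ nat (int E - B i l))"
      by (simp add: kp_def pev_mult pev_prod pev_power)
    also have "\<dots> = \<kappa> l * (monvec n B x l * (\<Prod>i<n. x i ^ nat (int E - B i l)))"
      using pX[of "\<lambda>w i. w ^ nat (int E - B i l)"] pV[OF l] by simp
    also have "monvec n B x l * (\<Prod>i<n. x i ^ nat (int E - B i l)) = (\<Prod>i<n. x i ^ E)"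
      unfolding monvec_def prod.distrib[symmetric]
      by (rule prod.cong[OF refl], rule laurent) (use xnz E l in auto)
    finally show "pev y (kp n B E \<phi> I Xp l) = \<kappa> l * pev y (hp n E Xp)"
      by (simp add: ph prod_power_distrib)
  qed
  have pM: "pev y (Mp s r N W B \<phi> I Xp i j) = (if i < s then (\<Sum>l<r. N i l * (of_int (B j l) * (\<kappa> l * monvec n B x l))) else W (i - s) j * x j)"
    if j: "j < n" for i j
  proof (cases "i < s")
    case True
    have "pev y (Mp s r N W B \<phi> I Xp i j) = (\<Sum>l<r. N i l * of_int (B j l) * pev y (Vp \<phi> I l))"
      using True by (simp add: Mp_def pev_sum pev_mult)
    also have "\<dots> = (\<Sum>l<r. N i l * (of_int (B j l) * (\<kappa> l * monvec n B x l)))"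
    proof (rule sum.cong[OF refl])
      fix l assume "l \<in> {..<r}"
      then show "N i l * of_int (B j l) * pev y (Vp \<phi> I l) = N i l * (of_int (B j l) * (\<kappa> l * monvec n B x l))"
        using pV[of l] by (simp add: mult.assoc)
    qed
    finally show ?thesis using True by simp
  next
    case False
    then show ?thesis using yx j by (simp add: Mp_def pev_mult)
  qed
  show "pev y (detp n (Mp s r N W B \<phi> I Xp)) = cdet n (\<lambda>i j. if i < s then (\<Sum>l<r. N i l * (of_int (B j l) * (\<kappa> l * monvec n B x l))) else W (i - s) j * x j)"
    unfolding pev_detp cdet_def
  proof (rule sum.cong[OF refl])
    fix p assume p: "p \<in> {p. p permutes {0..<n}}"
    have "(\<Prod>i=0..<n. pev y (Mp s r N W B \<phi> I Xp i (p i))) = (\<Prod>i=0..<n. (if i < s then (\<Sum>l<r. N i l * (of_int (B (p i) l) * (\<kappa> l * monvec n B x l))) else W (i - s) (p i) * x (p i)))"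
    proof (rule prod.cong[OF refl])
      fix i assume i: "i \<in> {0..<n}"
      then have pi: "p i < n" using p permutes_in_image[of p "{0..<n}" i] by auto
      show "pev y (Mp s r N W B \<phi> I Xp i (p i)) = (if i < s then (\<Sum>l<r. N i l * (of_int (B (p i) l) * (\<kappa> l * monvec n B x l))) else W (i - s) (p i) * x (p i))"
        by (rule pM[OF pi])
    qed
    then show "of_int (sign p) * (\<Prod>i=0..<n. pev y (Mp s r N W B \<phi> I Xp i (p i))) = of_int (sign p) * (\<Prod>i=0..<n. (if i < s then (\<Sum>l<r. N i l * (of_int (B (p i) l) * (\<kappa> l * monvec n B x l))) else W (i - s) (p i) * x (p i)))"
      by simp
  qed
qed

lemma frr_jac:
  assumes x: "x \<in> torus n" and nsd: "n = s + d"
  shows "full_row_rank (s + d) n (\<lambda>i j. deriv (\<lambda>z. Fsys s d r n N W B \<kappa> c (x(j:=z)) i) (x j)) \<longleftrightarrow>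
    cdet n (\<lambda>i j. if i < s then (\<Sum>l<r. N i l * (of_int (B j l) * (\<kappa> l * monvec n B x l))) else W (i - s) j * x j) \<noteq> 0"
proof -
  define J where "J i j = deriv (\<lambda>z. Fsys s d r n N W B \<kappa> c (x(j:=z)) i) (x j)" for i j
  define M where "M i j = (if i < s then (\<Sum>l<r. N i l * (of_int (B j l) * (\<kappa> l * monvec n B x l))) else W (i - s) j * x j)" for i j
  have xnz: "\<And>j. j < n \<Longrightarrow> x j \<noteq> 0" using x by (auto simp: torus_def)
  have JM: "M i j = J i j * x j" if "i < n" "j < n" for i j
  proof (cases "i < s")
    case True then show ?thesis using jac_f_row[OF x that(2) True] by (simp add: M_def J_def)
  next
    case False then show ?thesis using jac_W_row[OF that(2), of s i d] that nsd by (simp add: M_def J_def)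
  qed
  have "full_row_rank (s + d) n J \<longleftrightarrow> full_row_rank n n M"
  proof -
    have "(\<Sum>i<n. a i * M i j) = (\<Sum>i<n. a i * J i j) * x j" if "j < n" for a j
    proof -
      have "(\<Sum>i<n. a i * M i j) = (\<Sum>i<n. a i * J i j * x j)"
        by (rule sum.cong) (use JM that in auto)
      then show ?thesis by (simp add: sum_distrib_right)
    qed
    then have "(\<forall>j<n. (\<Sum>i<n. a i * M i j) = 0) \<longleftrightarrow> (\<forall>j<n. (\<Sum>i<n. a i * J i j) = 0)" for a
      using xnz by auto
    then show ?thesis unfolding full_row_rank_def nsd by simp
  qed
  also have "\<dots> \<longleftrightarrow> cdet n M \<noteq> 0" by (rule frr_cdet)
  finally show ?thesis unfolding J_def M_def .
qed


lemma E_bound: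
  fixes B :: "nat \<Rightarrow> nat \<Rightarrow> int"
  shows "\<forall>i<n. \<forall>l<r. B i l \<le> int (\<Sum>i<n. \<Sum>l<r. nat \<bar>B i l\<bar>)"
proof (intro allI impI)
  fix i l assume i: "i < n" and l: "l < r"
  have "nat \<bar>B i l\<bar> \<le> (\<Sum>l<r. nat \<bar>B i l\<bar>)" by (rule member_le_sum) (use l in auto)
  also have "\<dots> \<le> (\<Sum>i<n. \<Sum>l<r. nat \<bar>B i l\<bar>)"
    by (rule member_le_sum[where f = "\<lambda>i. \<Sum>l<r. nat \<bar>B i l\<bar>"]) (use i in auto)
  finally show "B i l \<le> int (\<Sum>i<n. \<Sum>l<r. nat \<bar>B i l\<bar>)" by linarith
qed

lemma frr_kernel:
  fixes N :: "nat \<Rightarrow> nat \<Rightarrow> complex"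
  assumes "full_row_rank s r N"
  shows "\<exists>I \<phi>. I \<subseteq> {..<r} \<and> card I + s = r \<and>
    (\<forall>v. (\<forall>i<s. (\<Sum>j<r. N i j * v j) = 0) \<longrightarrow> (\<forall>l<r. v l = (\<Sum>k\<in>I. \<phi> l k * v k)))"
proof -
  have "\<forall>a. (\<forall>j\<in>{..<r}. (\<Sum>i<s. a i * N i j) = 0) \<longrightarrow> (\<forall>i<s. a i = 0)"
    using assms by (simp add: full_row_rank_def)
  from kernel_param[OF finite_lessThan this] show ?thesis by (simp add: Ball_def lessThan_iff)
qed

lemma fsys_rows:
  assumes "\<forall>i<s + d. Fsys s d r n N W B \<kappa> c x i = 0"
  shows "\<forall>i<s. (\<Sum>j<r. N i j * (\<kappa> j * monvec n B x j)) = 0"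
    and "\<forall>k<d. (\<Sum>i<n. W k i * x i) = c k"
proof -
  show "\<forall>i<s. (\<Sum>j<r. N i j * (\<kappa> j * monvec n B x j)) = 0"
  proof (intro allI impI)
    fix i assume "i < s"
    then show "(\<Sum>j<r. N i j * (\<kappa> j * monvec n B x j)) = 0"
      using assms[rule_format, of i] by (simp add: Fsys_def fsys_def)
  qed
  show "\<forall>k<d. (\<Sum>i<n. W k i * x i) = c k"
  proof (intro allI impI)
    fix k assume "k < d"
    then show "(\<Sum>i<n. W k i * x i) = c k"
      using assms[rule_format, of "s + k"] by (simp add: Fsys_def)
  qed
qed

lemma jac_eq: "jac G \<alpha> x = (\<lambda>i j. deriv (\<lambda>z. G \<alpha> (x(j:=z)) i) (x j))"
  by (simp add: jac_def fun_eq_iff)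

lemma jac_Fsys: "jac (\<lambda>\<alpha> x. Fsys s d r n N W B (K \<alpha>) (Cc \<alpha>) x) \<alpha> x = (\<lambda>i j. deriv (\<lambda>z. Fsys s d r n N W B (K \<alpha>) (Cc \<alpha>) (x(j:=z)) i) (x j))"
  by (simp add: jac_def fun_eq_iff)

lemma case_c:
  fixes N W :: "nat \<Rightarrow> nat \<Rightarrow> complex" and B :: "nat \<Rightarrow> nat \<Rightarrow> int"
  assumes sn: "s \<le> n" and dd: "d = n - s" and rN: "full_row_rank s r N" and rW: "full_row_rank d n W"
    and c: "c \<in> cvec d"
  shows "generic_nondeg_property r (s + d) n (\<lambda>\<kappa> x. Fsys s d r n N W B \<kappa> c x)"
  unfolding generic_nondeg_property_def
proof
  assume "\<exists>\<alpha>\<in>cvec r. \<exists>x. nondeg_sol (s + d) n (\<lambda>\<kappa> x. Fsys s d r n N W B \<kappa> c x) \<alpha> x"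
  then obtain \<kappa>0 x0 where ns0: "nondeg_sol (s + d) n (\<lambda>\<kappa> x. Fsys s d r n N W B \<kappa> c x) \<kappa>0 x0" by blast
  have x0: "x0 \<in> torus n" and sol0: "\<forall>i<s + d. Fsys s d r n N W B \<kappa>0 c x0 i = 0"
    and fr0: "full_row_rank (s + d) n (\<lambda>i j. deriv (\<lambda>z. Fsys s d r n N W B \<kappa>0 c (x0(j:=z)) i) (x0 j))"
    using ns0 by (auto simp: nondeg_sol_def jac_eq)
  have nsd: "n = s + d" using sn dd by simp
  obtain I \<phi> where I: "I \<subseteq> {..<r}" "card I + s = r"
    and kerN: "\<forall>v. (\<forall>i<s. (\<Sum>j<r. N i j * v j) = 0) \<longrightarrow> (\<forall>l<r. v l = (\<Sum>k\<in>I. \<phi> l k * v k))"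
    using frr_kernel[OF rN] by blast
  obtain I' \<phi>W where I': "I' \<subseteq> {..<n}" "card I' + d = n"
    and kerW: "\<forall>v. (\<forall>i<d. (\<Sum>j<n. W i j * v j) = 0) \<longrightarrow> (\<forall>l<n. v l = (\<Sum>k\<in>I'. \<phi>W l k * v k))"
    using frr_kernel[OF rW] by blast
  define E where "E = (\<Sum>i<n. \<Sum>l<r. nat \<bar>B i l\<bar>)"
  have E: "\<forall>i<n. \<forall>l<r. B i l \<le> int E" unfolding E_def by (rule E_bound)
  define Xp where "Xp i = cst (x0 i) + (\<Sum>k\<in>I'. cst (\<phi>W i k) * var (r + k))" for i
  define V where "V = I \<union> (\<lambda>k. r + k) ` I'"
  define \<psi> where "\<psi> = kp n B E \<phi> I Xp"
  define h where "h = hp n E Xp"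
  define Q where "Q = detp n (Mp s r N W B \<phi> I Xp)"
  have finI: "finite I" using I(1) finite_subset by blast
  have finI': "finite I'" using I'(1) finite_subset by blast
  have finV: "finite V" using finI finI' by (simp add: V_def)
  have cardV: "card V \<le> r"
  proof -
    have "card V \<le> card I + card ((\<lambda>k. r + k) ` I')" unfolding V_def by (rule card_Un_le)
    also have "card ((\<lambda>k. r + k) ` I') = card I'" by (rule card_image) (simp add: inj_on_def)
    finally show ?thesis using I(2) I'(2) nsd by simp
  qed
  have IV: "I \<subseteq> V" by (simp add: V_def)
  have vX: "vars_in V (Xp i)" for i
    unfolding Xp_def by (intro vars_in_add vars_in_cst vars_in_sum vars_in_mult vars_in_var) (auto simp: V_def)
  have vpsi: "vars_in V (\<psi> j)" for j unfolding \<psi>_def by (rule vars_in_kp[OF IV vX])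
  have vh: "vars_in V h" unfolding h_def by (rule vars_in_hp[OF vX])
  have vQ: "vars_in V Q" unfolding Q_def by (intro vars_in_detp vars_in_Mp[OF IV vX])
  have pX: "pev y (Xp i) = x0 i + (\<Sum>k\<in>I'. \<phi>W i k * y (r + k))" for y i
    by (simp add: Xp_def pev_add pev_sum pev_mult)
  have Q0: "Q \<noteq> 0"
  proof -
    define v0 where "v0 l = \<kappa>0 l * monvec n B x0 l" for l
    define y0 where "y0 k = (if k < r then v0 k else 0)" for k
    have Nv0: "\<forall>i<s. (\<Sum>j<r. N i j * v0 j) = 0" using fsys_rows(1)[OF sol0] by (simp add: v0_def)
    have ker0: "\<forall>l<r. \<kappa>0 l * monvec n B x0 l = (\<Sum>k\<in>I. \<phi> l k * y0 k)"
    proof (intro allI impI)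
      fix l assume l: "l < r"
      have "v0 l = (\<Sum>k\<in>I. \<phi> l k * v0 k)" using kerN Nv0 l by blast
      also have "\<dots> = (\<Sum>k\<in>I. \<phi> l k * y0 k)" by (rule sum.cong) (use I(1) in \<open>auto simp: y0_def\<close>)
      finally show "\<kappa>0 l * monvec n B x0 l = (\<Sum>k\<in>I. \<phi> l k * y0 k)" by (simp add: v0_def)
    qed
    have yx0: "\<forall>i<n. pev y0 (Xp i) = x0 i" by (simp add: pX y0_def)
    have "pev y0 Q = cdet n (\<lambda>i j. if i < s then (\<Sum>l<r. N i l * (of_int (B j l) * (\<kappa>0 l * monvec n B x0 l))) else W (i - s) j * x0 j)"
      unfolding Q_def by (rule core_eval(3)[OF x0 E ker0 yx0])
    also have "\<dots> \<noteq> 0" using frr_jac[OF x0 nsd] fr0 by blast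
    finally show ?thesis by auto
  qed
  have "\<exists>U. zariski_open r U \<and> U \<noteq> {} \<and> (\<forall>\<alpha>\<in>U. \<forall>x\<in>torus n. (\<forall>i<s + d. Fsys s d r n N W B \<alpha> c x i = 0) \<longrightarrow> nondeg_sol (s + d) n (\<lambda>\<kappa> x. Fsys s d r n N W B \<kappa> c x) \<alpha> x)"
  proof (rule generic_assembly[OF finV cardV order_refl vpsi vh vQ Q0])
    fix \<alpha> x assume \<alpha>c: "\<alpha> \<in> cvec r" and \<alpha>nz: "\<forall>j<r. \<alpha> j \<noteq> 0" and x: "x \<in> torus n"
      and sol: "\<forall>i<s + d. Fsys s d r n N W B \<alpha> c x i = 0"
      and nfr: "\<not> full_row_rank (s + d) n (jac (\<lambda>\<kappa> x. Fsys s d r n N W B \<kappa> c x) \<alpha> x)"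
    define v where "v l = \<alpha> l * monvec n B x l" for l
    define w where "w i = x i - x0 i" for i
    define y where "y k = (if k < r then v k else w (k - r))" for k
    have Nv: "\<forall>i<s. (\<Sum>j<r. N i j * v j) = 0" using fsys_rows(1)[OF sol] by (simp add: v_def)
    have Ww: "\<forall>i<d. (\<Sum>j<n. W i j * w j) = 0"
    proof (intro allI impI)
      fix i assume i: "i < d"
      have "(\<Sum>j<n. W i j * w j) = (\<Sum>j<n. W i j * x j) - (\<Sum>j<n. W i j * x0 j)"
        by (simp add: w_def right_diff_distrib sum_subtractf)
      then show "(\<Sum>j<n. W i j * w j) = 0" using fsys_rows(2)[OF sol] fsys_rows(2)[OF sol0] i by simp
    qed
    have ker: "\<forall>l<r. \<alpha> l * monvec n B x l = (\<Sum>k\<in>I. \<phi> l k * y k)"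
    proof (intro allI impI)
      fix l assume l: "l < r"
      have "v l = (\<Sum>k\<in>I. \<phi> l k * v k)" using kerN Nv l by blast
      also have "\<dots> = (\<Sum>k\<in>I. \<phi> l k * y k)" by (rule sum.cong) (use I(1) in \<open>auto simp: y_def\<close>)
      finally show "\<alpha> l * monvec n B x l = (\<Sum>k\<in>I. \<phi> l k * y k)" by (simp add: v_def)
    qed
    have yx: "\<forall>i<n. pev y (Xp i) = x i"
    proof (intro allI impI)
      fix i assume i: "i < n"
      have "pev y (Xp i) = x0 i + (\<Sum>k\<in>I'. \<phi>W i k * w k)" by (simp add: pX y_def)
      also have "(\<Sum>k\<in>I'. \<phi>W i k * w k) = w i" using kerW Ww i by metis
      finally show "pev y (Xp i) = x i" by (simp add: w_def)
    qed
    have hy: "pev y h \<noteq> 0" unfolding h_def by (rule core_eval(1)[OF x E ker yx])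
    have ky: "\<forall>l<r. pev y (\<psi> l) = \<alpha> l * pev y h" unfolding \<psi>_def h_def by (rule core_eval(2)[OF x E ker yx])
    have "pev y Q = cdet n (\<lambda>i j. if i < s then (\<Sum>l<r. N i l * (of_int (B j l) * (\<alpha> l * monvec n B x l))) else W (i - s) j * x j)"
      unfolding Q_def by (rule core_eval(3)[OF x E ker yx])
    also have "\<dots> = 0" using frr_jac[OF x nsd, of r N W B \<alpha> c] nfr by (simp add: jac_eq)
    finally have Qy: "pev y Q = 0" .
    show "\<exists>y. pev y Q = 0 \<and> pev y h \<noteq> 0 \<and> (\<forall>j<r. \<alpha> j = pev y (\<psi> j) / pev y h)"
      using Qy hy ky by (intro exI[of _ y]) auto
  qed
  then show "\<exists>U. zariski_open r U \<and> U \<noteq> {} \<and> (\<forall>\<alpha>\<in>U. \<forall>x\<in>torus n. (\<forall>i<s + d. Fsys s d r n N W B \<alpha> c x i = 0) \<longrightarrow> nondeg_sol (s + d) n (\<lambda>\<kappa> x. Fsys s d r n N W B \<kappa> c x) \<alpha> x)" .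
qed


lemma case_F:
  fixes N W :: "nat \<Rightarrow> nat \<Rightarrow> complex" and B :: "nat \<Rightarrow> nat \<Rightarrow> int"
  assumes sn: "s \<le> n" and dd: "d = n - s" and rN: "full_row_rank s r N"
  shows "generic_nondeg_property (r + d) (s + d) n
       (\<lambda>\<alpha> x. Fsys s d r n N W B (\<lambda>j. if j < r then \<alpha> j else 0) (\<lambda>k. \<alpha> (r + k)) x)"
  unfolding generic_nondeg_property_def
proof
  let ?G = "\<lambda>\<alpha> x. Fsys s d r n N W B (\<lambda>j. if j < r then \<alpha> j else 0) (\<lambda>k. \<alpha> (r + k)) x"
  assume "\<exists>\<alpha>\<in>cvec (r + d). \<exists>x. nondeg_sol (s + d) n ?G \<alpha> x"
  then obtain \<alpha>0 x0 where ns0: "nondeg_sol (s + d) n ?G \<alpha>0 x0" by blast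
  define \<kappa>0 where "\<kappa>0 = (\<lambda>j. if j < r then \<alpha>0 j else 0)"
  have x0: "x0 \<in> torus n" and sol0: "\<forall>i<s + d. Fsys s d r n N W B \<kappa>0 (\<lambda>k. \<alpha>0 (r + k)) x0 i = 0"
    and fr0: "full_row_rank (s + d) n (\<lambda>i j. deriv (\<lambda>z. Fsys s d r n N W B \<kappa>0 (\<lambda>k. \<alpha>0 (r + k)) (x0(j:=z)) i) (x0 j))"
    using ns0 by (auto simp: nondeg_sol_def jac_eq \<kappa>0_def)
  have nsd: "n = s + d" using sn dd by simp
  obtain I \<phi> where I: "I \<subseteq> {..<r}" "card I + s = r"
    and kerN: "\<forall>v. (\<forall>i<s. (\<Sum>j<r. N i j * v j) = 0) \<longrightarrow> (\<forall>l<r. v l = (\<Sum>k\<in>I. \<phi> l k * v k))"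
    using frr_kernel[OF rN] by blast
  define E where "E = (\<Sum>i<n. \<Sum>l<r. nat \<bar>B i l\<bar>)"
  have E: "\<forall>i<n. \<forall>l<r. B i l \<le> int E" unfolding E_def by (rule E_bound)
  define Xp where "Xp i = var (r + i)" for i
  define V where "V = I \<union> (\<lambda>k. r + k) ` {..<n}"
  define h where "h = hp n E Xp"
  define \<psi> where "\<psi> j = (if j < r then kp n B E \<phi> I Xp j else (\<Sum>i<n. cst (W (j - r) i) * Xp i) * h)" for j
  define Q where "Q = detp n (Mp s r N W B \<phi> I Xp)"
  have finI: "finite I" using I(1) finite_subset by blast
  have finV: "finite V" using finI by (simp add: V_def)
  have cardV: "card V \<le> r + d"
  proof -
    have "card V \<le> card I + card ((\<lambda>k. r + k) ` {..<n})" unfolding V_def by (rule card_Un_le)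
    also have "card ((\<lambda>k. r + k) ` {..<n}) = n" by (subst card_image) (simp_all add: inj_on_def)
    finally show ?thesis using I(2) nsd by simp
  qed
  have IV: "I \<subseteq> V" by (simp add: V_def)
  have vX: "vars_in V (Xp i)" if "i < n" for i
    unfolding Xp_def by (rule vars_in_var) (use that in \<open>simp add: V_def\<close>)
  have vh: "vars_in V h" unfolding h_def by (rule vars_in_hp[OF vX])
  have vpsi: "vars_in V (\<psi> j)" for j
    unfolding \<psi>_def by (auto intro!: vars_in_kp[OF IV vX] vars_in_mult vars_in_sum vars_in_cst vX vh)
  have vQ: "vars_in V Q" unfolding Q_def by (intro vars_in_detp vars_in_Mp[OF IV vX]) simp
  have pX: "pev y (Xp i) = y (r + i)" for y i by (simp add: Xp_def)
  have Q0: "Q \<noteq> 0"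
  proof -
    define v0 where "v0 l = \<kappa>0 l * monvec n B x0 l" for l
    define y0 where "y0 k = (if k < r then v0 k else x0 (k - r))" for k
    have Nv0: "\<forall>i<s. (\<Sum>j<r. N i j * v0 j) = 0" using fsys_rows(1)[OF sol0] by (simp add: v0_def)
    have ker0: "\<forall>l<r. \<kappa>0 l * monvec n B x0 l = (\<Sum>k\<in>I. \<phi> l k * y0 k)"
    proof (intro allI impI)
      fix l assume l: "l < r"
      have "v0 l = (\<Sum>k\<in>I. \<phi> l k * v0 k)" using kerN Nv0 l by blast
      also have "\<dots> = (\<Sum>k\<in>I. \<phi> l k * y0 k)" by (rule sum.cong) (use I(1) in \<open>auto simp: y0_def\<close>)
      finally show "\<kappa>0 l * monvec n B x0 l = (\<Sum>k\<in>I. \<phi> l k * y0 k)" by (simp add: v0_def)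
    qed
    have yx0: "\<forall>i<n. pev y0 (Xp i) = x0 i" by (simp add: pX y0_def)
    have "pev y0 Q = cdet n (\<lambda>i j. if i < s then (\<Sum>l<r. N i l * (of_int (B j l) * (\<kappa>0 l * monvec n B x0 l))) else W (i - s) j * x0 j)"
      unfolding Q_def by (rule core_eval(3)[OF x0 E ker0 yx0])
    also have "\<dots> \<noteq> 0" using frr_jac[OF x0 nsd] fr0 by blast
    finally show ?thesis by auto
  qed
  have rm: "r \<le> r + d" by simp
  have "\<exists>U. zariski_open (r + d) U \<and> U \<noteq> {} \<and> (\<forall>\<alpha>\<in>U. \<forall>x\<in>torus n. (\<forall>i<s + d. ?G \<alpha> x i = 0) \<longrightarrow> nondeg_sol (s + d) n ?G \<alpha> x)"
  proof (rule generic_assembly[OF finV cardV rm vpsi vh vQ Q0])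
    fix \<alpha> x assume \<alpha>c: "\<alpha> \<in> cvec (r + d)" and \<alpha>nz: "\<forall>j<r. \<alpha> j \<noteq> 0" and x: "x \<in> torus n"
      and sol: "\<forall>i<s + d. ?G \<alpha> x i = 0"
      and nfr: "\<not> full_row_rank (s + d) n (jac ?G \<alpha> x)"
    define \<kappa> where "\<kappa> = (\<lambda>j. if j < r then \<alpha> j else 0)"
    have sol': "\<forall>i<s + d. Fsys s d r n N W B \<kappa> (\<lambda>k. \<alpha> (r + k)) x i = 0" using sol by (simp add: \<kappa>_def)
    define v where "v l = \<kappa> l * monvec n B x l" for l
    define y where "y k = (if k < r then v k else x (k - r))" for k
    have Nv: "\<forall>i<s. (\<Sum>j<r. N i j * v j) = 0" using fsys_rows(1)[OF sol'] by (simp add: v_def)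
    have ker: "\<forall>l<r. \<kappa> l * monvec n B x l = (\<Sum>k\<in>I. \<phi> l k * y k)"
    proof (intro allI impI)
      fix l assume l: "l < r"
      have "v l = (\<Sum>k\<in>I. \<phi> l k * v k)" using kerN Nv l by blast
      also have "\<dots> = (\<Sum>k\<in>I. \<phi> l k * y k)" by (rule sum.cong) (use I(1) in \<open>auto simp: y_def\<close>)
      finally show "\<kappa> l * monvec n B x l = (\<Sum>k\<in>I. \<phi> l k * y k)" by (simp add: v_def)
    qed
    have yx: "\<forall>i<n. pev y (Xp i) = x i" by (simp add: pX y_def)
    have hy: "pev y h \<noteq> 0" unfolding h_def by (rule core_eval(1)[OF x E ker yx])
    have ky: "\<forall>l<r. pev y (kp n B E \<phi> I Xp l) = \<kappa> l * pev y h" unfolding h_def by (rule core_eval(2)[OF x E ker yx])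
    have "pev y Q = cdet n (\<lambda>i j. if i < s then (\<Sum>l<r. N i l * (of_int (B j l) * (\<kappa> l * monvec n B x l))) else W (i - s) j * x j)"
      unfolding Q_def by (rule core_eval(3)[OF x E ker yx])
    also have "\<dots> = 0" using frr_jac[OF x nsd, of r N W B \<kappa> "\<lambda>k. \<alpha> (r + k)"] nfr by (simp add: jac_eq \<kappa>_def)
    finally have Qy: "pev y Q = 0" .
    have all: "\<forall>j<r + d. \<alpha> j = pev y (\<psi> j) / pev y h"
    proof (intro allI impI)
      fix j assume j: "j < r + d"
      show "\<alpha> j = pev y (\<psi> j) / pev y h"
      proof (cases "j < r")
        case True
        then show ?thesis using ky hy by (simp add: \<psi>_def \<kappa>_def)
      next
        case False
        then obtain k where k: "j = r + k" "k < d" using j by (metis add_diff_inverse_nat add_less_cancel_left)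
        have "(\<Sum>i<n. W k i * x i) = \<alpha> (r + k)" using fsys_rows(2)[OF sol'] k(2) by simp
        moreover have "pev y (\<psi> j) = (\<Sum>i<n. W k i * x i) * pev y h"
          using False yx by (simp add: \<psi>_def k(1) pev_mult pev_sum)
        ultimately show ?thesis using hy k(1) by simp
      qed
    qed
    show "\<exists>y. pev y Q = 0 \<and> pev y h \<noteq> 0 \<and> (\<forall>j<r + d. \<alpha> j = pev y (\<psi> j) / pev y h)"
      using Qy hy all by (intro exI[of _ y]) auto
  qed
  then show "\<exists>U. zariski_open (r + d) U \<and> U \<noteq> {} \<and> (\<forall>\<alpha>\<in>U. \<forall>x\<in>torus n. (\<forall>i<s + d. ?G \<alpha> x i = 0) \<longrightarrow> nondeg_sol (s + d) n ?G \<alpha> x)" .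
qed

theorem mainTheorem10:
  fixes s r n d :: nat
    and N :: "nat \<Rightarrow> nat \<Rightarrow> complex"
    and W :: "nat \<Rightarrow> nat \<Rightarrow> complex"
    and B :: "nat \<Rightarrow> nat \<Rightarrow> int"
  assumes "s \<le> n" and "d = n - s"
    and "full_row_rank s r N"
    and "full_row_rank d n W"
  shows
    "generic_nondeg_property (r + d) (s + d) n
       (\<lambda>\<alpha> x. Fsys s d r n N W B (\<lambda>j. if j < r then \<alpha> j else 0) (\<lambda>k. \<alpha> (r + k)) x)
     \<and> (\<forall>c\<in>cvec d. generic_nondeg_property r (s + d) n
          (\<lambda>\<kappa> x. Fsys s d r n N W B \<kappa> c x))
     \<and> (s = n \<longrightarrow> generic_nondeg_property r s n (\<lambda>\<kappa> x. fsys s r n N B \<kappa> x))"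
proof (intro conjI ballI impI)
  show "generic_nondeg_property (r + d) (s + d) n
       (\<lambda>\<alpha> x. Fsys s d r n N W B (\<lambda>j. if j < r then \<alpha> j else 0) (\<lambda>k. \<alpha> (r + k)) x)"
    by (rule case_F[OF assms(1-3)])
  fix c assume "c \<in> cvec d"
  then show "generic_nondeg_property r (s + d) n (\<lambda>\<kappa> x. Fsys s d r n N W B \<kappa> c x)"
    by (rule case_c[OF assms])
next
  assume sn: "s = n"
  then have d0: "d = 0" using assms(2) by simp
  have c0: "(\<lambda>_. 0) \<in> cvec d" by (simp add: cvec_def)
  have "generic_nondeg_property r (s + d) n (\<lambda>\<kappa> x. Fsys s d r n N W B \<kappa> (\<lambda>_. 0) x)"
    by (rule case_c[OF assms c0])
  moreover have "(\<lambda>\<kappa> x. Fsys s d r n N W B \<kappa> (\<lambda>_. 0) x) = (\<lambda>\<kappa> x. fsys s r n N B \<kappa> x)"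
    by (intro ext) (simp add: Fsys_def fsys_def d0)
  ultimately show "generic_nondeg_property r s n (\<lambda>\<kappa> x. fsys s r n N B \<kappa> x)" using d0 by simp
qed


end
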